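(* Let $G=SL_n(\mathbb C)$ or $G=GL_n(\mathbb C)$, let $B$ be the Borel subgroup of upper triangular matrices, and let $w\in S_n$. If there exist $x\in\mathfrak g$ and a Hessenberg space $H\subseteq\mathfrak g$ such that $\mathcal B(x,H)=X_w$, then $w$ avoids the pattern $[4231]$.
   Context: $\mathfrak g$ is the Lie algebra of $G$ and $\mathfrak b$ that of $B$. The Weyl group is $S_n$; $w\in S_n$ is written in one-line notation $[w_1\cdots w_n]$, $w_i=w(i)$, and $\dot w$ is a scalar multiple in $G$ of the permutation matrix with $e_i\mapsto e_{w(i)}$. $X_w$ is the closure in $G/B$ of $B\dot wB/B$. A Hessenberg space is a subspace $H\subseteq\mathfrak g$ with $[\mathfrak b,H]\subseteq H$; $\mathcal B(x,H)=\{gB\in G/B:g^{-1}xg\in H\}$. For $v\in S_m$, $w\in S_n$, $w$ contains the pattern $v$ if there are indices $i_1<\dots<i_m$ such that for all $a,b\in[m]$, $w_{i_a}<w_{i_b}$ iff $v_a<v_b$; otherwise $w$ avoids $v$. *)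

theory Defs
  imports "Jordan_Normal_Form.Determinant" "HOL-Combinatorics.Permutations"
begin

datatype group_kind = GL | SL

definition mtrace :: "complex mat \<Rightarrow> complex" where
  "mtrace A = (\<Sum>i<dim_row A. A $$ (i,i))"

definition grp :: "group_kind \<Rightarrow> nat \<Rightarrow> complex mat set" where
  "grp k n = {g \<in> carrier_mat n n. (case k of GL \<Rightarrow> det g \<noteq> 0 | SL \<Rightarrow> det g = 1)}"

definition lie :: "group_kind \<Rightarrow> nat \<Rightarrow> complex mat set" where
  "lie k n = {y \<in> carrier_mat n n. (case k of GL \<Rightarrow> True | SL \<Rightarrow> mtrace y = 0)}"

definition borel :: "group_kind \<Rightarrow> nat \<Rightarrow> complex mat set" where
  "borel k n = {b \<in> grp k n. upper_triangular b}"

definition borel_lie :: "group_kind \<Rightarrow> nat \<Rightarrow> complex mat set" where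
  "borel_lie k n = {y \<in> lie k n. upper_triangular y}"

text \<open>Permutation matrix of w (0-based indices): e_j maps to e_(w j).\<close>
definition perm_mat :: "nat \<Rightarrow> (nat \<Rightarrow> nat) \<Rightarrow> complex mat" where
  "perm_mat n w = mat n n (\<lambda>(i,j). if i = w j then 1 else 0)"

text \<open>Bruhat cell B w B in G, with w-dot any scalar multiple of the permutation matrix lying in G.\<close>
definition bruhat_cell :: "group_kind \<Rightarrow> nat \<Rightarrow> (nat \<Rightarrow> nat) \<Rightarrow> complex mat set" where
  "bruhat_cell k n w = {b1 * (c \<cdot>\<^sub>m perm_mat n w) * b2 | b1 b2 c.
      b1 \<in> borel k n \<and> b2 \<in> borel k n \<and> c \<cdot>\<^sub>m perm_mat n w \<in> grp k n}"

text \<open>Closure in G with respect to the (Euclidean) matrix topology, via entrywise convergent sequences.\<close>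
definition closure_in_grp :: "group_kind \<Rightarrow> nat \<Rightarrow> complex mat set \<Rightarrow> complex mat set" where
  "closure_in_grp k n S = {g \<in> grp k n. \<exists>s :: nat \<Rightarrow> complex mat.
      (\<forall>m. s m \<in> S) \<and> (\<forall>i<n. \<forall>j<n. (\<lambda>m. s m $$ (i,j)) \<longlonglongrightarrow> g $$ (i,j))}"

definition coset_B :: "group_kind \<Rightarrow> nat \<Rightarrow> complex mat \<Rightarrow> complex mat set" where
  "coset_B k n g = {g * b | b. b \<in> borel k n}"

definition schubert :: "group_kind \<Rightarrow> nat \<Rightarrow> (nat \<Rightarrow> nat) \<Rightarrow> complex mat set set" where
  "schubert k n w = coset_B k n ` closure_in_grp k n (bruhat_cell k n w)"

definition hessenberg_space :: "group_kind \<Rightarrow> nat \<Rightarrow> complex mat set \<Rightarrow> bool" where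
  "hessenberg_space k n H \<longleftrightarrow> H \<subseteq> lie k n \<and> 0\<^sub>m n n \<in> H
     \<and> (\<forall>a\<in>H. \<forall>b\<in>H. a + b \<in> H) \<and> (\<forall>c. \<forall>a\<in>H. c \<cdot>\<^sub>m a \<in> H)
     \<and> (\<forall>y\<in>borel_lie k n. \<forall>h\<in>H. y * h - h * y \<in> H)"

definition hessenberg_variety :: "group_kind \<Rightarrow> nat \<Rightarrow> complex mat \<Rightarrow> complex mat set \<Rightarrow> complex mat set set" where
  "hessenberg_variety k n x H = {coset_B k n g | g. g \<in> grp k n \<and>
      (\<exists>ginv \<in> carrier_mat n n. ginv * g = 1\<^sub>m n \<and> g * ginv = 1\<^sub>m n \<and> ginv * x * g \<in> H)}"

text \<open>Pattern containment; v is a pattern in one-line notation (list), w a permutation of {0..<n}.\<close>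
definition contains_pattern :: "nat list \<Rightarrow> nat \<Rightarrow> (nat \<Rightarrow> nat) \<Rightarrow> bool" where
  "contains_pattern v n w \<longleftrightarrow> (\<exists>idx :: nat \<Rightarrow> nat.
      (\<forall>a b. a < b \<and> b < length v \<longrightarrow> idx a < idx b)
      \<and> (\<forall>a < length v. idx a < n)
      \<and> (\<forall>a < length v. \<forall>b < length v. (w (idx a) < w (idx b) \<longleftrightarrow> v ! a < v ! b)))"

definition avoids_pattern :: "nat list \<Rightarrow> nat \<Rightarrow> (nat \<Rightarrow> nat) \<Rightarrow> bool" where
  "avoids_pattern v n w \<longleftrightarrow> \<not> contains_pattern v n w"

end

theory Submission
  imports Defs
begin


declare minus_carrier_mat[simp]

lemma mult_entry:
  assumes "A \<in> carrier_mat n m" "B \<in> carrier_mat m p" "i < n" "j < p"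
  shows "(A * B) $$ (i,j) = (\<Sum>k<m. A $$ (i,k) * B $$ (k,j))"
  using assms by (auto simp: scalar_prod_def lessThan_atLeast0 intro!: sum.cong)

definition Em :: "nat \<Rightarrow> nat \<Rightarrow> nat \<Rightarrow> complex mat" where
  "Em n a b = mat n n (\<lambda>(i,j). if i = a \<and> j = b then 1 else 0)"

lemma Em_carrier[simp]: "Em n a b \<in> carrier_mat n n"
  by (simp add: Em_def)

lemma Em_index[simp]: "i < n \<Longrightarrow> j < n \<Longrightarrow> Em n a b $$ (i,j) = (if i = a \<and> j = b then 1 else 0)"
  by (simp add: Em_def)

lemma Em_dim[simp]: "dim_row (Em n a b) = n" "dim_col (Em n a b) = n"
  by (simp_all add: Em_def)

lemma Em_mult: assumes "b < n" shows
  "Em n a b * Em n c d = (if b = c then Em n a d else 0\<^sub>m n n)"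
proof (rule eq_matI)
  fix i j assume ij: "i < dim_row (if b = c then Em n a d else 0\<^sub>m n n)"
    "j < dim_col (if b = c then Em n a d else 0\<^sub>m n n)"
  hence i: "i < n" and j: "j < n" by (auto split: if_splits)
  have "(Em n a b * Em n c d) $$ (i,j) = (\<Sum>k<n. Em n a b $$ (i,k) * Em n c d $$ (k,j))"
    by (rule mult_entry[OF Em_carrier Em_carrier i j])
  also have "\<dots> = (\<Sum>k<n. if k = b then (if i = a then 1 else 0) * (if b = c \<and> j = d then 1 else 0) else 0)"
    using i j by (intro sum.cong) auto
  also have "\<dots> = (if i = a then 1 else 0) * (if b = c \<and> j = d then 1 else 0)"
    using assms by simp
  finally show "(Em n a b * Em n c d) $$ (i,j) = (if b = c then Em n a d else 0\<^sub>m n n) $$ (i,j)"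
    using i j by auto
qed auto

definition dm :: "nat \<Rightarrow> (nat \<Rightarrow> complex) \<Rightarrow> complex mat" where
  "dm n f = mat n n (\<lambda>(i,j). if i = j then f i else 0)"

lemma dm_carrier[simp]: "dm n f \<in> carrier_mat n n" by (simp add: dm_def)
lemma dm_dim[simp]: "dim_row (dm n f) = n" "dim_col (dm n f) = n" by (simp_all add: dm_def)
lemma dm_index[simp]: "i < n \<Longrightarrow> j < n \<Longrightarrow> dm n f $$ (i,j) = (if i = j then f i else 0)"
  by (simp add: dm_def)

lemma dm_ad_entry:
  assumes h: "h \<in> carrier_mat n n" and i: "i < n" and j: "j < n"
  shows "(dm n f * h - h * dm n f) $$ (i,j) = (f i - f j) * h $$ (i,j)"
proof -
  have 1: "(dm n f * h) $$ (i,j) = f i * h $$ (i,j)"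
  proof -
    have "(dm n f * h) $$ (i,j) = (\<Sum>k<n. dm n f $$ (i,k) * h $$ (k,j))"
      by (rule mult_entry[OF dm_carrier h i j])
    also have "\<dots> = (\<Sum>k<n. if k = i then f i * h $$ (i,j) else 0)"
      using i by (intro sum.cong) auto
    finally show ?thesis using i by simp
  qed
  have 2: "(h * dm n f) $$ (i,j) = f j * h $$ (i,j)"
  proof -
    have "(h * dm n f) $$ (i,j) = (\<Sum>k<n. h $$ (i,k) * dm n f $$ (k,j))"
      by (rule mult_entry[OF h dm_carrier i j])
    also have "\<dots> = (\<Sum>k<n. if k = j then f j * h $$ (i,j) else 0)"
      using j by (intro sum.cong) auto
    finally show ?thesis using j by simp
  qed
  have "(dm n f * h - h * dm n f) $$ (i,j) = (dm n f * h) $$ (i,j) - (h * dm n f) $$ (i,j)"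
    using h i j by (subst index_minus_mat) auto
  thus ?thesis using 1 2 by (simp add: algebra_simps)
qed

lemma mtrace_Em: "a < n \<Longrightarrow> b < n \<Longrightarrow> mtrace (Em n a b) = (if a = b then 1 else 0)"
proof -
  assume a: "a < n" and b: "b < n"
  have "mtrace (Em n a b) = (\<Sum>i<n. if i = a \<and> i = b then 1 else 0)"
    unfolding mtrace_def by (intro sum.cong) auto
  also have "\<dots> = (\<Sum>i<n. if i = a then (if a = b then 1 else 0) else 0)"
    by (intro sum.cong) auto
  finally show ?thesis using a by simp
qed

lemma borel_lieI:
  assumes "y \<in> carrier_mat n n" "upper_triangular y" "mtrace y = 0"
  shows "y \<in> borel_lie k n"
  using assms unfolding borel_lie_def lie_def by (cases k) auto

lemma Em_borel_lie: "a < b \<Longrightarrow> b < n \<Longrightarrow> Em n a b \<in> borel_lie k n"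
  by (rule borel_lieI) (auto simp: upper_triangular_def mtrace_Em)

definition Dab :: "nat \<Rightarrow> nat \<Rightarrow> nat \<Rightarrow> complex mat" where
  "Dab n a b = dm n (\<lambda>i. if i = a then 1 else if i = b then -1 else 0)"

lemma Dab_borel_lie: assumes "a < n" "b < n" "a \<noteq> b" shows "Dab n a b \<in> borel_lie k n"
proof (rule borel_lieI)
  show "Dab n a b \<in> carrier_mat n n" by (simp add: Dab_def)
  show "upper_triangular (Dab n a b)" by (auto simp: upper_triangular_def Dab_def)
  have "mtrace (Dab n a b) = (\<Sum>i<n. (if i = a then 1 else 0) + (if i = b then -1 else 0))"
    unfolding mtrace_def Dab_def using assms by (intro sum.cong) auto
  also have "\<dots> = 0" using assms by (simp add: sum.distrib)
  finally show "mtrace (Dab n a b) = 0" .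
qed

lemma Em_minus_borel_lie: assumes "a < n" "b < n" shows "Em n a a - Em n b b \<in> borel_lie k n"
proof (rule borel_lieI)
  show "Em n a a - Em n b b \<in> carrier_mat n n" by simp
  show "upper_triangular (Em n a a - Em n b b)" by (auto simp: upper_triangular_def)
  have "mtrace (Em n a a - Em n b b) = mtrace (Em n a a) - mtrace (Em n b b)"
    unfolding mtrace_def by (simp add: sum_subtractf)
  thus "mtrace (Em n a a - Em n b b) = 0" using assms by (simp add: mtrace_Em)
qed

definition msum :: "nat \<Rightarrow> 'b set \<Rightarrow> ('b \<Rightarrow> complex mat) \<Rightarrow> complex mat" where
  "msum n F f = mat n n (\<lambda>ij. \<Sum>t\<in>F. f t $$ ij)"

lemma msum_carrier[simp]: "msum n F f \<in> carrier_mat n n" by (simp add: msum_def)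
lemma msum_dim[simp]: "dim_row (msum n F f) = n" "dim_col (msum n F f) = n" by (simp_all add: msum_def)
lemma msum_index[simp]: "i < n \<Longrightarrow> j < n \<Longrightarrow> msum n F f $$ (i,j) = (\<Sum>t\<in>F. f t $$ (i,j))"
  by (simp add: msum_def)

locale hs =
  fixes kk :: group_kind and n :: nat and H :: "complex mat set"
  assumes hs: "hessenberg_space kk n H"
begin

lemma carr: "h \<in> H \<Longrightarrow> h \<in> carrier_mat n n"
  using hs unfolding hessenberg_space_def lie_def by auto
lemma zero: "0\<^sub>m n n \<in> H" using hs unfolding hessenberg_space_def by auto
lemma add: "a \<in> H \<Longrightarrow> b \<in> H \<Longrightarrow> a + b \<in> H" using hs unfolding hessenberg_space_def by auto
lemma smult: "a \<in> H \<Longrightarrow> c \<cdot>\<^sub>m a \<in> H" using hs unfolding hessenberg_space_def by auto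
lemma brk: "y \<in> borel_lie kk n \<Longrightarrow> h \<in> H \<Longrightarrow> y * h - h * y \<in> H"
  using hs unfolding hessenberg_space_def by auto

lemma minus: assumes "a \<in> H" "b \<in> H" shows "a - b \<in> H"
proof -
  have "a - b = a + (-1) \<cdot>\<^sub>m b" using carr[OF assms(1)] carr[OF assms(2)]
    by (intro eq_matI) auto
  thus ?thesis using add smult assms by simp
qed

lemma msum_H: assumes "finite F" "\<And>t. t \<in> F \<Longrightarrow> f t \<in> H" shows "msum n F f \<in> H"
  using assms
proof (induction F rule: finite_induct)
  case empty
  have "msum n {} f = 0\<^sub>m n n" by (intro eq_matI) auto
  then show ?case using zero by simp
next
  case (insert t F)
  have "msum n (insert t F) f = f t + msum n F f"
    using insert carr[of "f t"] by (intro eq_matI) auto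
  then show ?case using insert add by simp
qed

lemma extr: assumes h: "h \<in> H" and a: "a < n" and b: "b < n" and ab: "a \<noteq> b"
  shows "(h $$ (a,b)) \<cdot>\<^sub>m Em n a b \<in> H"
proof -
  define f where "f = (\<lambda>i::nat. if i = a then (1::complex) else if i = b then -1 else 0)"
  define D where "D = Dab n a b"
  have D: "D = dm n f" unfolding D_def Dab_def f_def by simp
  have Db: "D \<in> borel_lie kk n" unfolding D_def by (rule Dab_borel_lie[OF a b ab])
  define ad where "ad = (\<lambda>X. D * X - X * D)"
  have adH: "X \<in> H \<Longrightarrow> ad X \<in> H" for X unfolding ad_def using brk[OF Db] .
  have adC: "X \<in> carrier_mat n n \<Longrightarrow> ad X \<in> carrier_mat n n" for X unfolding ad_def D by auto
  have adE: "X \<in> carrier_mat n n \<Longrightarrow> i < n \<Longrightarrow> j < n \<Longrightarrow> ad X $$ (i,j) = (f i - f j) * X $$ (i,j)" for X i j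
    unfolding ad_def D by (rule dm_ad_entry)
  define X1 where "X1 = ad h"
  define X2 where "X2 = ad X1"
  define X3 where "X3 = ad X2"
  define X4 where "X4 = ad X3"
  have hc: "h \<in> carrier_mat n n" using carr h .
  have H1: "X1 \<in> H" "X2 \<in> H" "X3 \<in> H" "X4 \<in> H" unfolding X1_def X2_def X3_def X4_def
    using adH h by auto
  have C1: "X1 \<in> carrier_mat n n" "X2 \<in> carrier_mat n n" "X3 \<in> carrier_mat n n" "X4 \<in> carrier_mat n n"
    unfolding X1_def X2_def X3_def X4_def using adC hc by auto
  have E1: "i < n \<Longrightarrow> j < n \<Longrightarrow> X1 $$ (i,j) = (f i - f j) * h $$ (i,j)" for i j
    unfolding X1_def using adE hc by simp
  have E2: "i < n \<Longrightarrow> j < n \<Longrightarrow> X2 $$ (i,j) = (f i - f j)^2 * h $$ (i,j)" for i j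
    unfolding X2_def using adE C1 E1 by (simp add: power2_eq_square)
  have E3: "i < n \<Longrightarrow> j < n \<Longrightarrow> X3 $$ (i,j) = (f i - f j)^3 * h $$ (i,j)" for i j
    unfolding X3_def using adE C1 E2 by (simp add: power3_eq_cube power2_eq_square)
  have E4: "i < n \<Longrightarrow> j < n \<Longrightarrow> X4 $$ (i,j) = (f i - f j)^4 * h $$ (i,j)" for i j
    unfolding X4_def using adE C1 E3 by (simp add: power3_eq_cube power4_eq_xxxx)
  define R where "R = (1/24) \<cdot>\<^sub>m (((X4 + 2 \<cdot>\<^sub>m X3) - X2) - 2 \<cdot>\<^sub>m X1)"
  have RH: "R \<in> H" unfolding R_def using H1 by (intro smult minus add) auto
  have poly: "((f i - f j)^4 + 2 * (f i - f j)^3 - (f i - f j)^2 - 2 * (f i - f j)) / 24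
        = (if i = a \<and> j = b then 1 else 0)" for i j
    unfolding f_def using ab by (auto simp: power2_eq_square power3_eq_cube power4_eq_xxxx)
  have "R = (h $$ (a,b)) \<cdot>\<^sub>m Em n a b"
  proof (rule eq_matI)
    fix i j assume "i < dim_row ((h $$ (a,b)) \<cdot>\<^sub>m Em n a b)" "j < dim_col ((h $$ (a,b)) \<cdot>\<^sub>m Em n a b)"
    hence i: "i < n" and j: "j < n" by auto
    have "R $$ (i,j) = (1/24) * (X4 $$ (i,j) + 2 * X3 $$ (i,j) - X2 $$ (i,j) - 2 * X1 $$ (i,j))"
      unfolding R_def using i j C1 by (simp add: carrier_matD)
    also have "\<dots> = ((f i - f j)^4 + 2 * (f i - f j)^3 - (f i - f j)^2 - 2 * (f i - f j)) / 24 * h $$ (i,j)"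
      unfolding E1[OF i j] E2[OF i j] E3[OF i j] E4[OF i j] by (simp add: field_simps)
    also have "\<dots> = (if i = a \<and> j = b then h $$ (a,b) else 0)" using poly[of i j] by auto
    finally show "R $$ (i,j) = ((h $$ (a,b)) \<cdot>\<^sub>m Em n a b) $$ (i,j)" using i j by simp
  qed (use C1 in \<open>auto simp: R_def carrier_matD\<close>)
  thus ?thesis using RH by simp
qed

lemma support: assumes h: "h \<in> H" and a: "a < n" and b: "b < n" and ab: "a \<noteq> b"
  and nz: "h $$ (a,b) \<noteq> 0" shows "Em n a b \<in> H"
proof -
  have "(1 / h $$ (a,b)) \<cdot>\<^sub>m ((h $$ (a,b)) \<cdot>\<^sub>m Em n a b) \<in> H" using extr[OF assms(1-4)] smult by blast
  moreover have "(1 / h $$ (a,b)) \<cdot>\<^sub>m ((h $$ (a,b)) \<cdot>\<^sub>m Em n a b) = Em n a b"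
    using nz by (intro eq_matI) auto
  ultimately show ?thesis by simp
qed

end



lemma upper_zero: "upper_triangular A \<Longrightarrow> A \<in> carrier_mat n n \<Longrightarrow> i < n \<Longrightarrow> j < i \<Longrightarrow> A $$ (i,j) = 0"
  unfolding upper_triangular_def by auto

context hs begin

lemma rowup: assumes E: "Em n i j \<in> H" and "i < n" "j < n" "k < i" "k \<noteq> j"
  shows "Em n k j \<in> H"
proof -
  have y: "Em n k i \<in> borel_lie k' n" for k' using assms by (intro Em_borel_lie) auto
  have "Em n k i * Em n i j - Em n i j * Em n k i \<in> H" using brk[OF y E] .
  moreover have "Em n k i * Em n i j - Em n i j * Em n k i = Em n k j"
    using assms by (simp add: Em_mult) (intro eq_matI, auto)
  ultimately show ?thesis by simp
qed

lemma colright: assumes E: "Em n i j \<in> H" and "i < n" "l < n" "j < l" "l \<noteq> i"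
  shows "Em n i l \<in> H"
proof -
  have y: "Em n j l \<in> borel_lie k' n" for k' using assms by (intro Em_borel_lie) auto
  have "(-1) \<cdot>\<^sub>m (Em n j l * Em n i j - Em n i j * Em n j l) \<in> H" using brk[OF y E] smult by blast
  moreover have "(-1) \<cdot>\<^sub>m (Em n j l * Em n i j - Em n i j * Em n j l) = Em n i l"
    using assms by (simp add: Em_mult) (intro eq_matI, auto)
  ultimately show ?thesis by simp
qed

lemma Ediff: assumes E: "Em n i j \<in> H" and "i < n" "j < i"
  shows "Em n j j - Em n i i \<in> H"
proof -
  have y: "Em n j i \<in> borel_lie k' n" for k' using assms by (intro Em_borel_lie) auto
  have "Em n j i * Em n i j - Em n i j * Em n j i \<in> H" using brk[OF y E] .
  moreover have "Em n j i * Em n i j - Em n i j * Em n j i = Em n j j - Em n i i"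
    using assms by (simp add: Em_mult)
  ultimately show ?thesis by simp
qed

lemma transp: assumes E: "Em n i j \<in> H" and "i < n" "j < i"
  shows "Em n j i \<in> H"
proof -
  have y: "Em n j i \<in> borel_lie k' n" for k' using assms by (intro Em_borel_lie) auto
  have D: "Em n j j - Em n i i \<in> H" by (rule Ediff[OF assms])
  have DD: "Em n j j - Em n i i = dm n (\<lambda>r. if r = j then 1 else if r = i then -1 else 0)"
    using assms by (intro eq_matI) auto
  have "(-1/2) \<cdot>\<^sub>m (Em n j i * (Em n j j - Em n i i) - (Em n j j - Em n i i) * Em n j i) \<in> H"
    using brk[OF y D] smult by blast
  moreover have "(-1/2) \<cdot>\<^sub>m (Em n j i * (Em n j j - Em n i i) - (Em n j j - Em n i i) * Em n j i) = Em n j i"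
  proof -
    have "Em n j i * (Em n j j - Em n i i) - (Em n j j - Em n i i) * Em n j i =
          (-1) \<cdot>\<^sub>m (dm n (\<lambda>r. if r = j then 1 else if r = i then -1 else 0) * Em n j i - Em n j i * dm n (\<lambda>r. if r = j then 1 else if r = i then -1 else 0))"
      unfolding DD by (intro eq_matI) auto
    moreover have "dm n (\<lambda>r. if r = j then 1 else if r = i then -1 else 0) * Em n j i - Em n j i * dm n (\<lambda>r. if r = j then 1 else if r = i then -1 else 0) = 2 \<cdot>\<^sub>m Em n j i"
    proof (rule eq_matI)
      fix a b assume "a < dim_row (2 \<cdot>\<^sub>m Em n j i)" "b < dim_col (2 \<cdot>\<^sub>m Em n j i)"
      hence a: "a < n" and b: "b < n" by auto
      show "(dm n (\<lambda>r. if r = j then 1 else if r = i then -1 else 0) * Em n j i - Em n j i * dm n (\<lambda>r. if r = j then 1 else if r = i then -1 else 0)) $$ (a,b) = (2 \<cdot>\<^sub>m Em n j i) $$ (a,b)"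
        using assms a b by (subst dm_ad_entry) auto
    qed auto
    ultimately show ?thesis by (intro eq_matI) auto
  qed
  ultimately show ?thesis by simp
qed

lemma uright: assumes E: "Em n i j \<in> H" and "i < n" "j < n" "i \<noteq> j" "k \<le> i" "j \<le> l" "l < n" "k \<noteq> l"
  shows "Em n k l \<in> H"
proof (cases "k = j")
  case False
  have 1: "Em n k j \<in> H"
  proof (cases "k = i")
    case True then show ?thesis using E by simp
  next
    case False then show ?thesis using rowup[OF E] assms \<open>k \<noteq> j\<close> by auto
  qed
  show ?thesis
  proof (cases "l = j")
    case True then show ?thesis using 1 by simp
  next
    case False then show ?thesis using colright[OF 1] assms by auto
  qed
next
  case True
  hence lj: "j < l" using assms by auto
  show ?thesis
  proof (cases "l = i")
    case False
    have "Em n i l \<in> H" using colright[OF E] assms lj False by auto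
    then show ?thesis
    proof (cases "k = i")
      case True then show ?thesis using \<open>Em n i l \<in> H\<close> by simp
    next
      case False then show ?thesis using rowup[OF \<open>Em n i l \<in> H\<close>] assms by auto
    qed
  next
    case True
    then show ?thesis using transp[OF E] assms \<open>k = j\<close> lj by auto
  qed
qed

lemma Ediff2: assumes E: "Em n i j \<in> H" and "i < n" "j < i" "j < r" "r \<le> i"
  shows "Em n r r - Em n j j \<in> H"
proof -
  have "Em n r j \<in> H" using uright[OF E] assms by auto
  hence "Em n j j - Em n r r \<in> H" using Ediff assms by auto
  hence "(-1) \<cdot>\<^sub>m (Em n j j - Em n r r) \<in> H" using smult by blast
  moreover have "(-1) \<cdot>\<^sub>m (Em n j j - Em n r r) = Em n r r - Em n j j" by (intro eq_matI) auto
  ultimately show ?thesis by simp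
qed

definition "offd = {(a,b). a < n \<and> b < n \<and> a \<noteq> b}"

lemma offd_fin: "finite offd"
proof -
  have "offd \<subseteq> {..<n} \<times> {..<n}" unfolding offd_def by auto
  thus ?thesis by (rule finite_subset) auto
qed

lemma sum_offd: assumes "i < n" "j < n"
  shows "(\<Sum>t\<in>offd. (case t of (a,b) \<Rightarrow> if i = a \<and> j = b then c a b else 0)) = (if i \<noteq> j then c i j else 0)"
proof -
  have "(\<Sum>t\<in>offd. (case t of (a,b) \<Rightarrow> if i = a \<and> j = b then c a b else 0)) =
        (\<Sum>t\<in>offd. if (i,j) = t then c i j else 0)"
    by (intro sum.cong) (auto split: prod.splits)
  also have "\<dots> = (if (i,j) \<in> offd then c i j else 0)" using offd_fin by simp
  finally show ?thesis using assms unfolding offd_def by auto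
qed

definition diagm :: "complex mat \<Rightarrow> complex mat" where "diagm M = dm n (\<lambda>i. M $$ (i,i))"

lemma diag_H: assumes h: "h \<in> H" shows "diagm h \<in> H"
proof -
  have hc: "h \<in> carrier_mat n n" using carr h .
  have "h + msum n offd (\<lambda>(a,b). (-1) \<cdot>\<^sub>m ((h $$ (a,b)) \<cdot>\<^sub>m Em n a b)) \<in> H"
    by (intro add h msum_H offd_fin) (auto simp: offd_def intro!: smult[OF extr[OF h]])
  moreover have "h + msum n offd (\<lambda>(a,b). (-1) \<cdot>\<^sub>m ((h $$ (a,b)) \<cdot>\<^sub>m Em n a b)) = diagm h"
  proof (rule eq_matI)
    fix i j assume "i < dim_row (diagm h)" "j < dim_col (diagm h)"
    hence i: "i < n" and j: "j < n" by (auto simp: diagm_def)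
    have "msum n offd (\<lambda>(a,b). (-1) \<cdot>\<^sub>m ((h $$ (a,b)) \<cdot>\<^sub>m Em n a b)) $$ (i,j)
       = (\<Sum>t\<in>offd. (case t of (a,b) \<Rightarrow> if i = a \<and> j = b then - h $$ (a,b) else 0))"
      using i j by (auto intro!: sum.cong)
    also have "\<dots> = (if i \<noteq> j then - h $$ (i,j) else 0)" by (rule sum_offd[OF i j])
    finally show "(h + msum n offd (\<lambda>(a,b). (-1) \<cdot>\<^sub>m ((h $$ (a,b)) \<cdot>\<^sub>m Em n a b))) $$ (i,j) = diagm h $$ (i,j)"
      using i j hc by (auto simp: diagm_def)
  qed (use hc in \<open>auto simp: diagm_def\<close>)
  ultimately show ?thesis by simp
qed

lemma char: assumes M: "M \<in> carrier_mat n n"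
  and sup: "\<And>a b. a < n \<Longrightarrow> b < n \<Longrightarrow> a \<noteq> b \<Longrightarrow> M $$ (a,b) \<noteq> 0 \<Longrightarrow> Em n a b \<in> H"
  and dg: "diagm M \<in> H"
  shows "M \<in> H"
proof -
  have T: "(M $$ (a,b)) \<cdot>\<^sub>m Em n a b \<in> H" if "(a,b) \<in> offd" for a b
  proof (cases "M $$ (a,b) = 0")
    case True
    have "(M $$ (a,b)) \<cdot>\<^sub>m Em n a b = 0\<^sub>m n n" using True by (intro eq_matI) auto
    then show ?thesis using zero by simp
  next
    case False
    then show ?thesis using sup that smult unfolding offd_def by auto
  qed
  have "diagm M + msum n offd (\<lambda>(a,b). (M $$ (a,b)) \<cdot>\<^sub>m Em n a b) \<in> H"
    by (intro add dg msum_H offd_fin) (auto intro: T)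
  moreover have "diagm M + msum n offd (\<lambda>(a,b). (M $$ (a,b)) \<cdot>\<^sub>m Em n a b) = M"
  proof (rule eq_matI)
    fix i j assume "i < dim_row M" "j < dim_col M"
    hence i: "i < n" and j: "j < n" using M by auto
    have "msum n offd (\<lambda>(a,b). (M $$ (a,b)) \<cdot>\<^sub>m Em n a b) $$ (i,j)
       = (\<Sum>t\<in>offd. (case t of (a,b) \<Rightarrow> if i = a \<and> j = b then M $$ (a,b) else 0))"
      using i j by (auto intro!: sum.cong)
    also have "\<dots> = (if i \<noteq> j then M $$ (i,j) else 0)" by (rule sum_offd[OF i j])
    finally show "(diagm M + msum n offd (\<lambda>(a,b). (M $$ (a,b)) \<cdot>\<^sub>m Em n a b)) $$ (i,j) = M $$ (i,j)"
      using i j by (auto simp: diagm_def)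
  qed (use M in \<open>auto simp: diagm_def\<close>)
  ultimately show ?thesis by simp
qed

end



lemma triple_entry:
  assumes b: "b \<in> carrier_mat n n" and h: "h \<in> carrier_mat n n" and b': "b' \<in> carrier_mat n n"
    and k: "k < n" and l: "l < n"
  shows "(b * h * b') $$ (k,l) = (\<Sum>i<n. \<Sum>j<n. b $$ (k,i) * h $$ (i,j) * b' $$ (j,l))"
proof -
  have "(b * h * b') $$ (k,l) = (\<Sum>j<n. (b * h) $$ (k,j) * b' $$ (j,l))"
    using assms by (intro mult_entry) auto
  also have "\<dots> = (\<Sum>j<n. (\<Sum>i<n. b $$ (k,i) * h $$ (i,j)) * b' $$ (j,l))"
    using assms by (intro sum.cong refl) (subst mult_entry[OF b h k], auto)
  also have "\<dots> = (\<Sum>j<n. \<Sum>i<n. b $$ (k,i) * h $$ (i,j) * b' $$ (j,l))"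
    by (simp add: sum_distrib_right)
  also have "\<dots> = (\<Sum>i<n. \<Sum>j<n. b $$ (k,i) * h $$ (i,j) * b' $$ (j,l))"
    by (rule sum.swap)
  finally show ?thesis .
qed

context hs begin

lemma adB:
  assumes b: "b \<in> carrier_mat n n" and b': "b' \<in> carrier_mat n n"
    and ub: "upper_triangular b" and ub': "upper_triangular b'"
    and bb': "b * b' = 1\<^sub>m n" and b'b: "b' * b = 1\<^sub>m n" and h: "h \<in> H"
  shows "b * h * b' \<in> H"
proof -
  have hc: "h \<in> carrier_mat n n" using carr h .
  define M where "M = b * h * b'"
  have Mc: "M \<in> carrier_mat n n" unfolding M_def using b b' hc by auto
  have ME: "k < n \<Longrightarrow> l < n \<Longrightarrow> M $$ (k,l) = (\<Sum>i<n. \<Sum>j<n. b $$ (k,i) * h $$ (i,j) * b' $$ (j,l))" for k l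
    unfolding M_def by (rule triple_entry[OF b hc b'])
  have bz: "k < n \<Longrightarrow> i < k \<Longrightarrow> b $$ (k,i) = 0" for k i using upper_zero[OF ub b] by auto
  have b'z: "j < n \<Longrightarrow> l < j \<Longrightarrow> b' $$ (j,l) = 0" for j l using upper_zero[OF ub' b'] by auto
  have bb'E: "k < n \<Longrightarrow> l < n \<Longrightarrow> (\<Sum>i<n. b $$ (k,i) * b' $$ (i,l)) = (if k = l then 1 else 0)" for k l
    using mult_entry[OF b b', of k l] bb' by simp
  have b'bE: "k < n \<Longrightarrow> l < n \<Longrightarrow> (\<Sum>i<n. b' $$ (k,i) * b $$ (i,l)) = (if k = l then 1 else 0)" for k l
    using mult_entry[OF b' b, of k l] b'b by simp
  have bdiag: "r < n \<Longrightarrow> b $$ (r,r) * b' $$ (r,r) = 1" for r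
  proof -
    assume r: "r < n"
    have "(\<Sum>i<n. b $$ (r,i) * b' $$ (i,r)) = (\<Sum>i<n. if i = r then b $$ (r,r) * b' $$ (r,r) else 0)"
    proof (intro sum.cong refl)
      fix i assume i: "i \<in> {..<n}"
      show "b $$ (r,i) * b' $$ (i,r) = (if i = r then b $$ (r,r) * b' $$ (r,r) else 0)"
        using bz[OF r, of i] b'z[of i r] i by (cases "i < r"; cases "r < i") auto
    qed
    thus ?thesis using bb'E[OF r r] r by simp
  qed
  have sup: "Em n k l \<in> H" if k: "k < n" and l: "l < n" and kl: "k \<noteq> l" and nz: "M $$ (k,l) \<noteq> 0" for k l
  proof -
    define S1 where "S1 = (\<Sum>i<n. \<Sum>j<n. if i = j then 0 else b $$ (k,i) * h $$ (i,j) * b' $$ (j,l))"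
    define S2 where "S2 = (\<Sum>i<n. b $$ (k,i) * h $$ (i,i) * b' $$ (i,l))"
    have split: "M $$ (k,l) = S1 + S2"
    proof -
      have "\<And>i. i < n \<Longrightarrow> (\<Sum>j<n. b $$ (k,i) * h $$ (i,j) * b' $$ (j,l)) =
          (\<Sum>j<n. if i = j then 0 else b $$ (k,i) * h $$ (i,j) * b' $$ (j,l)) + b $$ (k,i) * h $$ (i,i) * b' $$ (i,l)"
      proof -
        fix i assume i: "i < n"
        have "(\<Sum>j<n. b $$ (k,i) * h $$ (i,j) * b' $$ (j,l)) =
          (\<Sum>j<n. (if i = j then 0 else b $$ (k,i) * h $$ (i,j) * b' $$ (j,l)) + (if i = j then b $$ (k,i) * h $$ (i,i) * b' $$ (i,l) else 0))"
          by (intro sum.cong) auto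
        also have "\<dots> = (\<Sum>j<n. if i = j then 0 else b $$ (k,i) * h $$ (i,j) * b' $$ (j,l)) + b $$ (k,i) * h $$ (i,i) * b' $$ (i,l)"
          using i by (simp add: sum.distrib)
        finally show "(\<Sum>j<n. b $$ (k,i) * h $$ (i,j) * b' $$ (j,l)) =
          (\<Sum>j<n. if i = j then 0 else b $$ (k,i) * h $$ (i,j) * b' $$ (j,l)) + b $$ (k,i) * h $$ (i,i) * b' $$ (i,l)" .
      qed
      hence "M $$ (k,l) = (\<Sum>i<n. (\<Sum>j<n. if i = j then 0 else b $$ (k,i) * h $$ (i,j) * b' $$ (j,l)) + b $$ (k,i) * h $$ (i,i) * b' $$ (i,l))"
        unfolding ME[OF k l] by (intro sum.cong) auto
      thus ?thesis unfolding S1_def S2_def by (simp add: sum.distrib)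
    qed
    show ?thesis
    proof (cases "S1 = 0")
      case False
      then obtain i where i: "i < n" and "(\<Sum>j<n. if i = j then 0 else b $$ (k,i) * h $$ (i,j) * b' $$ (j,l)) \<noteq> 0"
        unfolding S1_def using sum.not_neutral_contains_not_neutral by blast
      then obtain j where j: "j < n" and t: "(if i = j then 0 else b $$ (k,i) * h $$ (i,j) * b' $$ (j,l)) \<noteq> 0"
        using sum.not_neutral_contains_not_neutral by blast
      have ij: "i \<noteq> j" using t by auto
      have "b $$ (k,i) \<noteq> 0" "h $$ (i,j) \<noteq> 0" "b' $$ (j,l) \<noteq> 0" using t ij by auto
      hence ki: "k \<le> i" and jl: "j \<le> l" using bz[OF k, of i] b'z[OF j, of l] by (force, force)
      have "Em n i j \<in> H" using support[OF h i j ij] \<open>h $$ (i,j) \<noteq> 0\<close> .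
      thus ?thesis using uright i j ij ki jl l kl by blast
    next
      case True
      hence S2: "S2 \<noteq> 0" using nz split by simp
      have "\<exists>i1 i2. k \<le> i1 \<and> i1 < i2 \<and> i2 \<le> l \<and> h $$ (i1,i1) \<noteq> h $$ (i2,i2)"
      proof (rule ccontr)
        assume "\<not> ?thesis"
        hence eqs: "\<And>i1 i2. k \<le> i1 \<Longrightarrow> i1 < i2 \<Longrightarrow> i2 \<le> l \<Longrightarrow> h $$ (i1,i1) = h $$ (i2,i2)" by blast
        have "S2 = (\<Sum>i<n. h $$ (k,k) * (b $$ (k,i) * b' $$ (i,l)))"
          unfolding S2_def
        proof (intro sum.cong refl)
          fix i assume i: "i \<in> {..<n}"
          show "b $$ (k,i) * h $$ (i,i) * b' $$ (i,l) = h $$ (k,k) * (b $$ (k,i) * b' $$ (i,l))"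
          proof (cases "k \<le> i \<and> i \<le> l")
            case True
            then have "h $$ (i,i) = h $$ (k,k)" using eqs[of k i] by (cases "k = i") auto
            then show ?thesis by simp
          next
            case False
            then have "b $$ (k,i) = 0 \<or> b' $$ (i,l) = 0" using bz[OF k, of i] b'z[of i l] i by auto
            then show ?thesis by auto
          qed
        qed
        also have "\<dots> = h $$ (k,k) * (\<Sum>i<n. b $$ (k,i) * b' $$ (i,l))" by (simp add: sum_distrib_left)
        also have "\<dots> = 0" using bb'E[OF k l] kl by simp
        finally show False using S2 by simp
      qed
      then obtain i1 i2 where ii: "k \<le> i1" "i1 < i2" "i2 \<le> l" and hne: "h $$ (i1,i1) \<noteq> h $$ (i2,i2)" by blast
      have i2: "i2 < n" using ii l by auto
      have i1: "i1 < n" using ii i2 by auto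
      have y: "Em n i1 i2 \<in> borel_lie kk n" using ii i2 by (intro Em_borel_lie) auto
      have DH: "diagm h \<in> H" using diag_H h .
      have "Em n i1 i2 * diagm h - diagm h * Em n i1 i2 \<in> H" using brk[OF y DH] .
      moreover have "(Em n i1 i2 * diagm h - diagm h * Em n i1 i2) $$ (i1,i2) \<noteq> 0"
      proof -
        have e1: "(diagm h * Em n i1 i2 - Em n i1 i2 * diagm h) $$ (i1,i2) = (h $$ (i1,i1) - h $$ (i2,i2)) * 1"
          unfolding diagm_def using i1 i2 ii by (subst dm_ad_entry) auto
        have "(Em n i1 i2 * diagm h - diagm h * Em n i1 i2) $$ (i1,i2)
             = - ((diagm h * Em n i1 i2 - Em n i1 i2 * diagm h) $$ (i1,i2))"
          using i1 i2 by (simp add: diagm_def)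
        thus ?thesis using e1 hne by simp
      qed
      ultimately have "Em n i1 i2 \<in> H" using support i1 i2 ii by auto
      thus ?thesis using uright i1 i2 ii l kl by auto
    qed
  qed
  define L where "L = {t \<in> {..<n} \<times> {..<n}. snd t < fst t}"
  have Lfin: "finite L" unfolding L_def by auto
  define F where "F = (\<lambda>i j. msum n {..<n} (\<lambda>r. (b $$ (r,i) * b' $$ (j,r)) \<cdot>\<^sub>m (Em n r r - Em n j j)))"
  have Fd[simp]: "dim_row (F i j) = n" "dim_col (F i j) = n" for i j by (simp_all add: F_def)
  have FH: "(h $$ (i,j)) \<cdot>\<^sub>m F i j \<in> H" if t: "(i,j) \<in> L" for i j
  proof (cases "h $$ (i,j) = 0")
    case True
    have "(h $$ (i,j)) \<cdot>\<^sub>m F i j = 0\<^sub>m n n" using True by (intro eq_matI) (auto simp: F_def)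
    thus ?thesis using zero by simp
  next
    case False
    have i: "i < n" and j: "j < n" and ji: "j < i" using t unfolding L_def by auto
    have Eij: "Em n i j \<in> H" using support[OF h i j _ False] ji by auto
    have "F i j \<in> H" unfolding F_def
    proof (intro msum_H)
      fix r assume r: "r \<in> {..<n}"
      show "(b $$ (r,i) * b' $$ (j,r)) \<cdot>\<^sub>m (Em n r r - Em n j j) \<in> H"
      proof (cases "r = j \<or> b $$ (r,i) * b' $$ (j,r) = 0")
        case True
        have "(b $$ (r,i) * b' $$ (j,r)) \<cdot>\<^sub>m (Em n r r - Em n j j) = 0\<^sub>m n n" using True by (intro eq_matI) auto
        thus ?thesis using zero by simp
      next
        case False
        hence "b $$ (r,i) \<noteq> 0" "b' $$ (j,r) \<noteq> 0" "r \<noteq> j" by auto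
        hence "r \<le> i" "j \<le> r" using bz[of r i] b'z[OF j, of r] r by (force, force)
        hence "Em n r r - Em n j j \<in> H" using Ediff2[OF Eij i ji] \<open>r \<noteq> j\<close> by auto
        thus ?thesis using smult by blast
      qed
    qed auto
    thus ?thesis using smult by blast
  qed
  have DM: "diagm M = diagm h + msum n L (\<lambda>(i,j). (h $$ (i,j)) \<cdot>\<^sub>m F i j)"
  proof (rule eq_matI)
    fix s t assume "s < dim_row (diagm h + msum n L (\<lambda>(i,j). (h $$ (i,j)) \<cdot>\<^sub>m F i j))"
      "t < dim_col (diagm h + msum n L (\<lambda>(i,j). (h $$ (i,j)) \<cdot>\<^sub>m F i j))"
    hence s: "s < n" and tt: "t < n" by (auto simp: diagm_def)
    have FE: "(i,j) \<in> L \<Longrightarrow> F i j $$ (s,t) = (if s = t then b $$ (s,i) * b' $$ (j,s) else 0)" for i j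
    proof -
      assume ij: "(i,j) \<in> L"
      hence i: "i < n" and j: "j < n" and ji: "j < i" unfolding L_def by auto
      define c where "c = (\<lambda>r. b $$ (r,i) * b' $$ (j,r))"
      define K where "K = (if s = j \<and> t = j then (1::complex) else 0)"
      have "F i j $$ (s,t) = (\<Sum>r<n. c r * ((if s = r \<and> t = r then 1 else 0) - K))"
        unfolding F_def c_def K_def using s tt by (intro trans[OF msum_index] sum.cong) auto
      also have "\<dots> = (\<Sum>r<n. c r * (if s = r \<and> t = r then 1 else 0)) - K * (\<Sum>r<n. c r)"
        by (simp add: right_diff_distrib sum_subtractf sum_distrib_left mult.commute)
      also have "(\<Sum>r<n. c r * (if s = r \<and> t = r then 1 else 0)) = (\<Sum>r<n. if r = s then (if s = t then c s else 0) else 0)"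
        by (intro sum.cong) auto
      also have "\<dots> = (if s = t then c s else 0)" using s by simp
      also have "(\<Sum>r<n. c r) = (\<Sum>r<n. b' $$ (j,r) * b $$ (r,i))" unfolding c_def by (simp add: mult.commute)
      also have "\<dots> = 0" using b'bE[OF j i] ji by simp
      finally show ?thesis unfolding c_def by simp
    qed
    show "diagm M $$ (s,t) = (diagm h + msum n L (\<lambda>(i,j). (h $$ (i,j)) \<cdot>\<^sub>m F i j)) $$ (s,t)"
    proof (cases "s = t")
      case False
      have "msum n L (\<lambda>(i,j). (h $$ (i,j)) \<cdot>\<^sub>m F i j) $$ (s,t) = 0"
        using s tt False FE by (auto intro!: sum.neutral)
      thus ?thesis using False s tt by (simp add: diagm_def)
    next
      case True
      have m1: "msum n L (\<lambda>(i,j). (h $$ (i,j)) \<cdot>\<^sub>m F i j) $$ (s,s) = (\<Sum>p\<in>L. (case p of (i,j) \<Rightarrow> h $$ (i,j) * (b $$ (s,i) * b' $$ (j,s))))"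
        using s FE[unfolded True[symmetric]] by (auto intro!: sum.cong)
      also have "\<dots> = (\<Sum>p\<in>{..<n} \<times> {..<n}. if snd p < fst p then (case p of (i,j) \<Rightarrow> h $$ (i,j) * (b $$ (s,i) * b' $$ (j,s))) else 0)"
        unfolding L_def by (rule sum.inter_filter) auto
      also have "\<dots> = (\<Sum>(i,j)\<in>{..<n} \<times> {..<n}. if j < i then b $$ (s,i) * h $$ (i,j) * b' $$ (j,s) else 0)"
        by (intro sum.cong) (auto simp: mult_ac)
      also have "\<dots> = (\<Sum>i<n. \<Sum>j<n. if j < i then b $$ (s,i) * h $$ (i,j) * b' $$ (j,s) else 0)"
        by (rule sum.cartesian_product[symmetric])
      finally have m1: "msum n L (\<lambda>(i,j). (h $$ (i,j)) \<cdot>\<^sub>m F i j) $$ (s,s) = (\<Sum>i<n. \<Sum>j<n. if j < i then b $$ (s,i) * h $$ (i,j) * b' $$ (j,s) else 0)" .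
      have "M $$ (s,s) = (\<Sum>i<n. \<Sum>j<n. (if j < i then b $$ (s,i) * h $$ (i,j) * b' $$ (j,s) else 0) + (if i = j then (if i = s then h $$ (s,s) else 0) else 0))"
        unfolding ME[OF s s]
      proof (intro sum.cong refl)
        fix i j assume i: "i \<in> {..<n}" and j: "j \<in> {..<n}"
        show "b $$ (s,i) * h $$ (i,j) * b' $$ (j,s) = (if j < i then b $$ (s,i) * h $$ (i,j) * b' $$ (j,s) else 0) + (if i = j then (if i = s then h $$ (s,s) else 0) else 0)"
        proof (cases "j < i")
          case True then show ?thesis by auto
        next
          case False
          show ?thesis
          proof (cases "i = j \<and> i = s")
            case True
            then show ?thesis using bdiag[OF s] by (auto simp: mult_ac)
          next
            case False2: False
            have "b $$ (s,i) = 0 \<or> b' $$ (j,s) = 0"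
              using bz[OF s, of i] b'z[of j s] j False False2 by (cases "i < s"; cases "s < j") auto
            then show ?thesis using False False2 by auto
          qed
        qed
      qed
      also have "\<dots> = (\<Sum>i<n. \<Sum>j<n. if j < i then b $$ (s,i) * h $$ (i,j) * b' $$ (j,s) else 0) + h $$ (s,s)"
        using s by (simp add: sum.distrib)
      finally show ?thesis using True s m1 Mc by (simp add: diagm_def)
    qed
  qed (auto simp: diagm_def)
  have "diagm M \<in> H" unfolding DM
    by (intro add diag_H h msum_H Lfin) (auto intro: FH)
  hence "M \<in> H" using char[OF Mc] sup by blast
  thus ?thesis unfolding M_def .
qed

end



definition gperm :: "nat \<Rightarrow> (nat \<Rightarrow> nat) \<Rightarrow> (nat \<Rightarrow> complex) \<Rightarrow> complex mat" where
  "gperm n u s = mat n n (\<lambda>(i,j). if i = u j then s j else 0)"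
definition ginvp :: "nat \<Rightarrow> (nat \<Rightarrow> nat) \<Rightarrow> (nat \<Rightarrow> complex) \<Rightarrow> complex mat" where
  "ginvp n u s = mat n n (\<lambda>(i,j). if j = u i then 1 / s i else 0)"

lemma gperm_carrier[simp]: "gperm n u s \<in> carrier_mat n n" by (simp add: gperm_def)
lemma ginvp_carrier[simp]: "ginvp n u s \<in> carrier_mat n n" by (simp add: ginvp_def)
lemma gperm_dim[simp]: "dim_row (gperm n u s) = n" "dim_col (gperm n u s) = n" by (simp_all add: gperm_def)
lemma ginvp_dim[simp]: "dim_row (ginvp n u s) = n" "dim_col (ginvp n u s) = n" by (simp_all add: ginvp_def)
lemma gperm_index[simp]: "i < n \<Longrightarrow> j < n \<Longrightarrow> gperm n u s $$ (i,j) = (if i = u j then s j else 0)"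
  by (simp add: gperm_def)
lemma ginvp_index[simp]: "i < n \<Longrightarrow> j < n \<Longrightarrow> ginvp n u s $$ (i,j) = (if j = u i then 1 / s i else 0)"
  by (simp add: ginvp_def)

lemma perm_lt: "u permutes {..<(n::nat)} \<Longrightarrow> i < n \<Longrightarrow> u i < n"
  using permutes_in_image by fastforce

lemma inv_lt: "u permutes {..<(n::nat)} \<Longrightarrow> i < n \<Longrightarrow> Hilbert_Choice.inv u i < n"
  using permutes_inv perm_lt by blast

lemma sum_perm_delta: assumes u: "u permutes {..<(n::nat)}" and a: "a < n"
  shows "(\<Sum>t<n. if a = u t then f t else 0) = f (Hilbert_Choice.inv u a)"
proof -
  have "(\<Sum>t<n. if a = u t then f t else 0) = (\<Sum>t<n. if t = Hilbert_Choice.inv u a then f t else 0)"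
    by (intro sum.cong refl) (metis permutes_inverses(1,2) u)
  also have "\<dots> = f (Hilbert_Choice.inv u a)" using inv_lt[OF u a] by (subst sum.delta) auto
  finally show ?thesis .
qed

lemma gperm_ginvp: assumes u: "u permutes {..<n}" and s: "\<And>j. j < n \<Longrightarrow> s j \<noteq> 0"
  shows "gperm n u s * ginvp n u s = 1\<^sub>m n"
proof (rule eq_matI)
  fix a b assume "a < dim_row (1\<^sub>m n :: complex mat)" "b < dim_col (1\<^sub>m n :: complex mat)"
  hence a: "a < n" and b: "b < n" by auto
  have "(gperm n u s * ginvp n u s) $$ (a,b) = (\<Sum>t<n. gperm n u s $$ (a,t) * ginvp n u s $$ (t,b))"
    by (rule mult_entry) (use a b in auto)
  also have "\<dots> = (\<Sum>t<n. if a = u t then s t * (if b = u t then 1 / s t else 0) else 0)"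
    using a b by (intro sum.cong) auto
  also have "\<dots> = s (Hilbert_Choice.inv u a) * (if b = u (Hilbert_Choice.inv u a) then 1 / s (Hilbert_Choice.inv u a) else 0)"
    by (rule sum_perm_delta[OF u a])
  also have "\<dots> = (if a = b then 1 else 0)"
    using s[OF inv_lt[OF u a]] permutes_inverses(1)[OF u] by auto
  finally show "(gperm n u s * ginvp n u s) $$ (a,b) = 1\<^sub>m n $$ (a,b)" using a b by simp
qed auto

lemma ginvp_gperm: assumes u: "u permutes {..<n}" and s: "\<And>j. j < n \<Longrightarrow> s j \<noteq> 0"
  shows "ginvp n u s * gperm n u s = 1\<^sub>m n"
proof (rule eq_matI)
  fix a b assume "a < dim_row (1\<^sub>m n :: complex mat)" "b < dim_col (1\<^sub>m n :: complex mat)"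
  hence a: "a < n" and b: "b < n" by auto
  have "(ginvp n u s * gperm n u s) $$ (a,b) = (\<Sum>t<n. ginvp n u s $$ (a,t) * gperm n u s $$ (t,b))"
    by (rule mult_entry) (use a b in auto)
  also have "\<dots> = (\<Sum>t<n. if t = u a then (1 / s a) * (if u a = u b then s b else 0) else 0)"
    using a b by (intro sum.cong) auto
  also have "\<dots> = (1 / s a) * (if u a = u b then s b else 0)"
    using perm_lt[OF u a] by simp
  also have "\<dots> = (if a = b then 1 else 0)"
    using s[OF a] permutes_inj[OF u] by (auto dest: injD)
  finally show "(ginvp n u s * gperm n u s) $$ (a,b) = 1\<^sub>m n $$ (a,b)" using a b by simp
qed auto

lemma conj_entry: assumes u: "u permutes {..<n}" and x: "x \<in> carrier_mat n n" and i: "i < n" and j: "j < n"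
  shows "(ginvp n u s * x * gperm n u s) $$ (i,j) = x $$ (u i, u j) * s j / s i"
proof -
  have "(ginvp n u s * x * gperm n u s) $$ (i,j) = (\<Sum>a<n. \<Sum>b<n. ginvp n u s $$ (i,a) * x $$ (a,b) * gperm n u s $$ (b,j))"
    by (rule triple_entry) (use x i j in auto)
  also have "\<dots> = (\<Sum>a<n. if a = u i then (\<Sum>b<n. if b = u j then x $$ (u i, u j) * s j / s i else 0) else 0)"
  proof (intro sum.cong refl)
    fix a assume a: "a \<in> {..<n}"
    show "(\<Sum>b<n. ginvp n u s $$ (i,a) * x $$ (a,b) * gperm n u s $$ (b,j)) = (if a = u i then (\<Sum>b<n. if b = u j then x $$ (u i, u j) * s j / s i else 0) else 0)"
    proof (cases "a = u i")
      case True
      have "(\<Sum>b<n. ginvp n u s $$ (i,a) * x $$ (a,b) * gperm n u s $$ (b,j)) = (\<Sum>b<n. if b = u j then x $$ (u i, u j) * s j / s i else 0)"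
        by (intro sum.cong refl) (use a True i j in auto)
      then show ?thesis using True by simp
    next
      case False
      then show ?thesis using a i by simp
    qed
  qed
  also have "\<dots> = x $$ (u i, u j) * s j / s i"
    using perm_lt[OF u i] perm_lt[OF u j] by simp
  finally show ?thesis .
qed

lemma smult_perm_mat: "c \<cdot>\<^sub>m perm_mat n w = gperm n w (\<lambda>_. c)"
  by (intro eq_matI) (auto simp: perm_mat_def)

lemma root_exists: assumes "n > 0" shows "\<exists>c::complex. c ^ n = a"
proof -
  define c where "c = rcis (root n (cmod a)) (Arg a / real n)"
  have "c ^ n = rcis (root n (cmod a) ^ n) (real n * (Arg a / real n))"
    unfolding c_def by (rule DeMoivre2)
  also have "\<dots> = rcis (cmod a) (Arg a)" using assms by (simp add: real_root_pow_pos2)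
  also have "\<dots> = a" by (rule rcis_cmod_Arg)
  finally show ?thesis by blast
qed

lemma one_in_borel: "1\<^sub>m n \<in> borel k n"
  unfolding borel_def grp_def by (cases k) (auto simp: upper_triangular_def)

lemma borelD: assumes "b \<in> borel k n"
  shows "b \<in> carrier_mat n n" "upper_triangular b" "det b \<noteq> 0"
  using assms unfolding borel_def grp_def by (cases k; auto)+

locale hyp = hs +
  fixes x :: "complex mat" and w :: "nat \<Rightarrow> nat"
  assumes xl: "x \<in> lie kk n" and wp: "w permutes {..<n}"
    and HV: "hessenberg_variety kk n x H = schubert kk n w"
begin

abbreviation "Z \<equiv> closure_in_grp kk n (bruhat_cell kk n w)"

lemma xc: "x \<in> carrier_mat n n" using xl unfolding lie_def by auto

lemma as3: "A \<in> carrier_mat n n \<Longrightarrow> B \<in> carrier_mat n n \<Longrightarrow> C \<in> carrier_mat n n \<Longrightarrow> A * B * C = A * (B * C)"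
  by (rule assoc_mult_mat)

lemma incl: assumes zZ: "z \<in> Z" and zi: "zi \<in> carrier_mat n n" and zzi: "z * zi = 1\<^sub>m n" and ziz: "zi * z = 1\<^sub>m n"
  shows "zi * x * z \<in> H"
proof -
  have zc: "z \<in> carrier_mat n n" using zZ unfolding closure_in_grp_def grp_def by auto
  have "coset_B kk n z \<in> schubert kk n w" unfolding schubert_def using zZ by auto
  hence "coset_B kk n z \<in> hessenberg_variety kk n x H" using HV by simp
  then obtain g ginv where cz: "coset_B kk n z = coset_B kk n g" and gG: "g \<in> grp kk n"
    and gi: "ginv \<in> carrier_mat n n" and gig: "ginv * g = 1\<^sub>m n" and ggi: "g * ginv = 1\<^sub>m n"
    and gH: "ginv * x * g \<in> H"
    unfolding hessenberg_variety_def by blast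
  have gc: "g \<in> carrier_mat n n" using gG unfolding grp_def by auto
  have "z \<in> coset_B kk n z" unfolding coset_B_def using one_in_borel zc by force
  hence "z \<in> coset_B kk n g" using cz by simp
  then obtain b1 where b1: "b1 \<in> borel kk n" and zgb: "z = g * b1" unfolding coset_B_def by blast
  have "g \<in> coset_B kk n g" unfolding coset_B_def using one_in_borel gc by force
  hence "g \<in> coset_B kk n z" using cz by simp
  then obtain b2 where b2: "b2 \<in> borel kk n" and gzb: "g = z * b2" unfolding coset_B_def by blast
  have b1c: "b1 \<in> carrier_mat n n" and b2c: "b2 \<in> carrier_mat n n" using borelD b1 b2 by auto
  have b21: "b2 * b1 = 1\<^sub>m n"
  proof -
    have "b2 * b1 = (zi * z) * (b2 * b1)" using ziz b1c b2c by simp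
    also have "\<dots> = zi * ((z * b2) * b1)" using zi zc b1c b2c by (simp add: as3)
    also have "\<dots> = 1\<^sub>m n" using gzb zgb ziz by simp
    finally show ?thesis .
  qed
  have b12: "b1 * b2 = 1\<^sub>m n"
  proof -
    have "b1 * b2 = (ginv * g) * (b1 * b2)" using gig b1c b2c by simp
    also have "\<dots> = ginv * ((g * b1) * b2)" using gi gc b1c b2c by (simp add: as3)
    also have "\<dots> = 1\<^sub>m n" using gzb zgb gig by simp
    finally show ?thesis .
  qed
  have giv: "ginv = b1 * zi"
  proof -
    have "ginv = ginv * (z * zi)" using zzi gi by simp
    also have "\<dots> = (ginv * g) * b1 * zi" using zgb gi gc b1c zi by (simp add: as3)
    also have "\<dots> = b1 * zi" using gig b1c by simp
    finally show ?thesis .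
  qed
  have "b2 * (ginv * x * g) * b1 = (b2 * b1) * zi * x * (z * b2 * b1)"
    unfolding giv gzb using b1c b2c zi zc xc by (simp add: as3)
  also have "\<dots> = zi * x * z" using b21 zi zc b1c b2c by (simp add: as3)
  finally have eq: "b2 * (ginv * x * g) * b1 = zi * x * z" .
  have "b2 * (ginv * x * g) * b1 \<in> H"
    using adB[OF b2c b1c borelD(2)[OF b2] borelD(2)[OF b1] b21 b12 gH] .
  thus ?thesis using eq by simp
qed

lemma excl: assumes VG: "V \<in> grp kk n" and Vi: "Vi \<in> carrier_mat n n" and VVi: "V * Vi = 1\<^sub>m n"
    and ViV: "Vi * V = 1\<^sub>m n" and VH: "Vi * x * V \<in> H"
  shows "\<exists>z \<in> Z. \<exists>b \<in> borel kk n. z = V * b"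
proof -
  have "coset_B kk n V \<in> hessenberg_variety kk n x H"
    unfolding hessenberg_variety_def using VG Vi VVi ViV VH by blast
  hence "coset_B kk n V \<in> schubert kk n w" using HV by simp
  then obtain z where zZ: "z \<in> Z" and cz: "coset_B kk n V = coset_B kk n z" unfolding schubert_def by auto
  have zc: "z \<in> carrier_mat n n" using zZ unfolding closure_in_grp_def grp_def by auto
  have "z \<in> coset_B kk n z" unfolding coset_B_def using one_in_borel zc by force
  hence "z \<in> coset_B kk n V" using cz by simp
  then obtain b where "b \<in> borel kk n" "z = V * b" unfolding coset_B_def by blast
  thus ?thesis using zZ by blast
qed

end



lemma det_tendsto:
  assumes A: "\<And>m. A m \<in> carrier_mat n n" and B: "B \<in> carrier_mat n n"
    and conv: "\<And>i j. i < n \<Longrightarrow> j < n \<Longrightarrow> (\<lambda>m. A m $$ (i,j)) \<longlonglongrightarrow> B $$ (i,j)"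
  shows "(\<lambda>m. det (A m)) \<longlonglongrightarrow> (det B :: complex)"
proof -
  have e1: "(\<lambda>m. det (A m)) = (\<lambda>m. \<Sum>p \<in> {p. p permutes {0..<n}}. signof p * (\<Prod>i = 0..<n. A m $$ (i, p i)))"
    using det_def'[OF A] by auto
  have cv: "(\<lambda>m. A m $$ (i, p i)) \<longlonglongrightarrow> B $$ (i, p i)" if "p \<in> {p. p permutes {0..<n}}" "i \<in> {0..<n}" for p i
    using that conv permutes_in_image[of p "{0..<n}" i] by auto
  have "(\<lambda>m. \<Sum>p \<in> {p. p permutes {0..<n}}. signof p * (\<Prod>i = 0..<n. A m $$ (i, p i)))
        \<longlonglongrightarrow> (\<Sum>p \<in> {p. p permutes {0..<n}}. signof p * (\<Prod>i = 0..<n. B $$ (i, p i)))"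
    by (rule tendsto_sum, rule tendsto_mult_left, rule tendsto_prod, rule cv) auto
  thus ?thesis unfolding e1 det_def'[OF B] .
qed

lemma mult_entry_n: "A \<in> carrier_mat n n \<Longrightarrow> B \<in> carrier_mat n n \<Longrightarrow> i < n \<Longrightarrow> j < n \<Longrightarrow>
  (A * B) $$ (i,j) = (\<Sum>k<n. A $$ (i,k) * B $$ (k,j))"
  by (rule mult_entry)

lemma bruhat_carrier: assumes "g \<in> bruhat_cell k n w" shows "g \<in> carrier_mat n n"
proof -
  obtain b1 b2 c where "b1 \<in> borel k n" "b2 \<in> borel k n" "g = b1 * (c \<cdot>\<^sub>m perm_mat n w) * b2"
    using assms unfolding bruhat_cell_def by blast
  moreover have "c \<cdot>\<^sub>m perm_mat n w \<in> carrier_mat n n" by (simp add: perm_mat_def)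
  ultimately show ?thesis using borelD[of b1 k n] borelD[of b2 k n] mult_carrier_mat by metis
qed

lemma upper_mult: assumes "A \<in> carrier_mat n n" "B \<in> carrier_mat n n" "upper_triangular A" "upper_triangular B"
  shows "upper_triangular (A * B)"
proof -
  have "(A * B) $$ (i,j) = 0" if "i < n" "j < i" for i j
  proof -
    have "(A * B) $$ (i,j) = (\<Sum>k<n. A $$ (i,k) * B $$ (k,j))" using assms that by (intro mult_entry_n) auto
    also have "\<dots> = 0"
    proof (intro sum.neutral ballI)
      fix k assume k: "k \<in> {..<n}"
      show "A $$ (i,k) * B $$ (k,j) = 0"
      proof (cases "k < i")
        case True then show ?thesis using upper_zero[OF assms(3,1)] that by auto
      next
        case False then show ?thesis using upper_zero[OF assms(4,2)] that k by auto
      qed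
    qed
    finally show ?thesis .
  qed
  thus ?thesis unfolding upper_triangular_def using assms by auto
qed

lemma borel_mult: assumes "a \<in> borel k n" "b \<in> borel k n" shows "a * b \<in> borel k n"
proof -
  have ac: "a \<in> carrier_mat n n" and bc: "b \<in> carrier_mat n n" using borelD assms by auto
  have "det (a * b) = det a * det b" by (rule det_mult[OF ac bc])
  thus ?thesis using assms upper_mult[OF ac bc] ac bc unfolding borel_def grp_def by (cases k) auto
qed

context hyp begin

lemma Z_carrier: "z \<in> Z \<Longrightarrow> z \<in> carrier_mat n n" unfolding closure_in_grp_def grp_def by auto

lemma left_mult_Z: assumes b: "b \<in> borel kk n" and z: "z \<in> Z" shows "b * z \<in> Z"
proof -
  have bc: "b \<in> carrier_mat n n" using borelD b by auto
  obtain s where sS: "\<And>m. s m \<in> bruhat_cell kk n w" and conv: "\<And>i j. i < n \<Longrightarrow> j < n \<Longrightarrow> (\<lambda>m. s m $$ (i,j)) \<longlonglongrightarrow> z $$ (i,j)"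
    and zG: "z \<in> grp kk n" using z unfolding closure_in_grp_def by blast
  have zc: "z \<in> carrier_mat n n" using zG unfolding grp_def by auto
  have sc: "s m \<in> carrier_mat n n" for m
    using sS[of m] by (rule bruhat_carrier)
  have "b * s m \<in> bruhat_cell kk n w" for m
  proof -
    obtain b1 b2 c where b1: "b1 \<in> borel kk n" and b2: "b2 \<in> borel kk n" and c: "c \<cdot>\<^sub>m perm_mat n w \<in> grp kk n"
      and e: "s m = b1 * (c \<cdot>\<^sub>m perm_mat n w) * b2" using sS[of m] unfolding bruhat_cell_def by blast
    have b1c: "b1 \<in> carrier_mat n n" using borelD b1 by auto
    have b2c: "b2 \<in> carrier_mat n n" using borelD b2 by auto
    have pc: "c \<cdot>\<^sub>m perm_mat n w \<in> carrier_mat n n" by (simp add: perm_mat_def)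
    have "b * s m = (b * b1) * (c \<cdot>\<^sub>m perm_mat n w) * b2" unfolding e using bc b1c b2c pc by (simp add: as3)
    moreover have "b * b1 \<in> borel kk n" using borel_mult b b1 by blast
    ultimately show ?thesis unfolding bruhat_cell_def using b2 c by blast
  qed
  moreover have "b * z \<in> grp kk n"
  proof -
    have "det (b * z) = det b * det z" by (rule det_mult[OF bc zc])
    thus ?thesis using b zG bc zc unfolding borel_def grp_def by (cases kk) auto
  qed
  moreover have "(\<lambda>m. (b * s m) $$ (i,j)) \<longlonglongrightarrow> (b * z) $$ (i,j)" if "i < n" "j < n" for i j
  proof -
    have "(\<lambda>m. (b * s m) $$ (i,j)) = (\<lambda>m. \<Sum>t<n. b $$ (i,t) * s m $$ (t,j))"
      using that bc sc by (intro ext mult_entry_n) auto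
    moreover have "(b * z) $$ (i,j) = (\<Sum>t<n. b $$ (i,t) * z $$ (t,j))" using that bc zc by (intro mult_entry_n) auto
    moreover have "(\<lambda>m. \<Sum>t<n. b $$ (i,t) * s m $$ (t,j)) \<longlonglongrightarrow> (\<Sum>t<n. b $$ (i,t) * z $$ (t,j))"
      using that by (intro tendsto_sum tendsto_mult_left conv) auto
    ultimately show ?thesis by simp
  qed
  ultimately show ?thesis unfolding closure_in_grp_def
    by (intro CollectI conjI exI[of _ "\<lambda>m. b * s m"]) auto
qed

end



context hyp begin

lemma closure_tau:
  assumes tp: "\<tau> permutes {..<n}" and ti: "\<And>j. \<tau> (\<tau> j) = j"
    and tor: "\<And>p. p < n \<Longrightarrow> p < \<tau> p \<Longrightarrow> w (\<tau> p) < w p"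
    and c0: "c0 \<cdot>\<^sub>m perm_mat n w \<in> grp kk n"
  shows "gperm n (w \<circ> \<tau>) (\<lambda>j. c0 * (if \<tau> j < j then -1 else 1)) \<in> Z"
proof -
  define iw where "iw = Hilbert_Choice.inv w"
  have wiw: "w (iw i) = i" for i unfolding iw_def using permutes_inverses(1)[OF wp] .
  have iww: "iw (w i) = i" for i unfolding iw_def using permutes_inverses(2)[OF wp] .
  have winj: "w a = w b \<Longrightarrow> a = b" for a b using iww by metis
  have wlt: "a < n \<Longrightarrow> w a < n" for a using perm_lt[OF wp] .
  have tlt: "a < n \<Longrightarrow> \<tau> a < n" for a using perm_lt[OF tp] .
  have tor': "j < n \<Longrightarrow> \<tau> j < j \<Longrightarrow> w j < w (\<tau> j)" for j
    using tor[of "\<tau> j"] ti[of j] tlt[of j] by auto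
  define b1 where "b1 = (\<lambda>e::complex. mat n n (\<lambda>(i,r). if i = r then 1 else if i < r \<and> r = w (\<tau> (iw i)) then 1/e else 0))"
  define d where "d = (\<lambda>(e::complex) j. if j < \<tau> j then e else if \<tau> j < j then 1/e else 1)"
  define b2 where "b2 = (\<lambda>e::complex. mat n n (\<lambda>(t,j). if t = j then d e j else if t = \<tau> j \<and> t < j then -1 else 0))"
  define G where "G = gperm n w (\<lambda>_. c0)"
  have G': "c0 \<cdot>\<^sub>m perm_mat n w = G" unfolding G_def by (rule smult_perm_mat)
  define A where "A = (\<lambda>i j. if i = w (\<tau> j) then (if \<tau> j < j then -1 else (1::complex)) else 0)"
  define Bc where "Bc = (\<lambda>i j. if j < \<tau> j \<and> i = w j then (1::complex) else 0)"
  have b1c: "b1 e \<in> carrier_mat n n" for e unfolding b1_def by simp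
  have b2c: "b2 e \<in> carrier_mat n n" for e unfolding b2_def by simp
  have Gc: "G \<in> carrier_mat n n" unfolding G_def by simp
  have B1E: "b1 e $$ (i, w t) = (if i = w t then 1 else if i < w t \<and> i = w (\<tau> t) then 1/e else 0)"
    if i: "i < n" and t: "t < n" for e i t
  proof -
    have iff: "w t = w (\<tau> (iw i)) \<longleftrightarrow> i = w (\<tau> t)"
    proof
      assume "w t = w (\<tau> (iw i))"
      hence "t = \<tau> (iw i)" using winj by blast
      hence "\<tau> t = iw i" using ti by simp
      thus "i = w (\<tau> t)" using wiw by simp
    next
      assume "i = w (\<tau> t)"
      hence "iw i = \<tau> t" using iww by simp
      thus "w t = w (\<tau> (iw i))" using ti by simp
    qed
    show ?thesis unfolding b1_def using i t wlt iff by auto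
  qed
  have B2E: "b2 e $$ (t,j) = (if t = j then d e j else if t = \<tau> j \<and> t < j then -1 else 0)"
    if "t < n" "j < n" for e t j unfolding b2_def using that by simp
  have PE: "(b1 e * G * b2 e) $$ (i,j) = c0 * (b1 e $$ (i, w j) * d e j + (if \<tau> j < j then - b1 e $$ (i, w (\<tau> j)) else 0))"
    if i: "i < n" and j: "j < n" for e i j
  proof -
    have BG: "(b1 e * G) $$ (i,t) = c0 * b1 e $$ (i, w t)" if t: "t < n" for t
    proof -
      have "(b1 e * G) $$ (i,t) = (\<Sum>r<n. b1 e $$ (i,r) * G $$ (r,t))"
        by (rule mult_entry_n[OF b1c Gc i t])
      also have "\<dots> = (\<Sum>r<n. if r = w t then c0 * b1 e $$ (i, w t) else 0)"
        using t unfolding G_def by (intro sum.cong refl) auto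
      also have "\<dots> = c0 * b1 e $$ (i, w t)" using wlt[OF t] by simp
      finally show ?thesis .
    qed
    define F where "F = (\<lambda>t. c0 * b1 e $$ (i, w t) * b2 e $$ (t,j))"
    have "(b1 e * G * b2 e) $$ (i,j) = (\<Sum>t<n. (b1 e * G) $$ (i,t) * b2 e $$ (t,j))"
      by (rule mult_entry_n[OF mult_carrier_mat[OF b1c Gc] b2c i j])
    also have "\<dots> = (\<Sum>t<n. F t)" unfolding F_def using BG by (intro sum.cong) auto
    also have "\<dots> = (\<Sum>t<n. (if t = j then F j else 0) + (if \<tau> j < j then (if t = \<tau> j then F (\<tau> j) else 0) else 0))"
    proof (intro sum.cong refl)
      fix t assume t: "t \<in> {..<n}"
      show "F t = (if t = j then F j else 0) + (if \<tau> j < j then (if t = \<tau> j then F (\<tau> j) else 0) else 0)"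
        using t j B2E[of t j e] by (auto simp: F_def)
    qed
    also have "\<dots> = F j + (if \<tau> j < j then F (\<tau> j) else 0)"
      using j tlt[OF j] by (simp add: sum.distrib)
    also have "\<dots> = c0 * (b1 e $$ (i, w j) * d e j + (if \<tau> j < j then - b1 e $$ (i, w (\<tau> j)) else 0))"
      unfolding F_def using B2E[of j j e] B2E[of "\<tau> j" j e] j tlt[OF j] by (auto simp: algebra_simps)
    finally show ?thesis .
  qed
  have PEq: "b1 e $$ (i, w j) * d e j + (if \<tau> j < j then - b1 e $$ (i, w (\<tau> j)) else 0) = A i j + e * Bc i j"
    if i: "i < n" and j: "j < n" and e: "e \<noteq> 0" for e i j
  proof -
    have tj: "\<tau> j < n" using tlt[OF j] .
    consider (same) "\<tau> j = j" | (up) "j < \<tau> j" | (down) "\<tau> j < j" by linarith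
    then show ?thesis
    proof cases
      case same
      then show ?thesis using B1E[OF i j, of e] unfolding d_def A_def Bc_def by auto
    next
      case up
      have o: "w (\<tau> j) < w j" using tor[OF j up] .
      show ?thesis using B1E[OF i j, of e] up o e unfolding d_def A_def Bc_def by auto
    next
      case down
      have o: "w j < w (\<tau> j)" using tor'[OF j down] .
      have ne: "w j \<noteq> w (\<tau> j)" using o by simp
      show ?thesis using B1E[OF i j, of e] B1E[OF i tj, of e] down o ne e ti[of j]
        unfolding d_def A_def Bc_def by (auto simp: field_simps)
    qed
  qed
  have detb1: "det (b1 e) = 1" for e
  proof -
    have ut: "upper_triangular (b1 e)" unfolding b1_def upper_triangular_def by auto
    have "det (b1 e) = (\<Prod>i = 0..<n. b1 e $$ (i,i))"
      using det_upper_triangular[OF ut b1c] by (simp add: prod_list_diag_prod b1_def)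
    also have "\<dots> = 1" unfolding b1_def by (intro prod.neutral) auto
    finally show ?thesis .
  qed
  have detb2: "det (b2 e) = 1" if e: "e \<noteq> 0" for e
  proof -
    have ut: "upper_triangular (b2 e)" unfolding b2_def upper_triangular_def by auto
    have "det (b2 e) = (\<Prod>j = 0..<n. d e j)"
      using det_upper_triangular[OF ut b2c] by (simp add: prod_list_diag_prod b2_def)
    also have "\<dots> = (\<Prod>j\<in>{..<n}. (if j < \<tau> j then e else 1) * (if \<tau> j < j then 1/e else 1))"
      unfolding d_def atLeast0LessThan by (intro prod.cong) auto
    also have "\<dots> = (\<Prod>j\<in>{..<n}. if j < \<tau> j then e else 1) * (\<Prod>j\<in>{..<n}. if \<tau> j < j then 1/e else 1)"
      by (rule prod.distrib)
    also have "(\<Prod>j\<in>{..<n}. if \<tau> j < j then 1/e else 1) = (\<Prod>j\<in>{..<n}. ((\<lambda>j. if \<tau> j < j then 1/e else 1) \<circ> \<tau>) j)"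
      by (rule prod.permute[OF tp])
    also have "\<dots> = (\<Prod>j\<in>{..<n}. if j < \<tau> j then 1/e else 1)" using ti by (intro prod.cong) auto
    also have "(\<Prod>j\<in>{..<n}. if j < \<tau> j then e else 1) * (\<Prod>j\<in>{..<n}. if j < \<tau> j then 1/e else 1)
        = (\<Prod>j\<in>{..<n}. (if j < \<tau> j then e else 1) * (if j < \<tau> j then 1/e else 1))"
      by (rule prod.distrib[symmetric])
    also have "\<dots> = 1" using e by (intro prod.neutral) auto
    finally show ?thesis .
  qed
  have b1B: "b1 e \<in> borel kk n" for e
    using detb1[of e] b1c unfolding borel_def grp_def b1_def
    by (cases kk) (auto simp: upper_triangular_def)
  have b2B: "e \<noteq> 0 \<Longrightarrow> b2 e \<in> borel kk n" for e
    using detb2[of e] b2c unfolding borel_def grp_def b2_def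
    by (cases kk) (auto simp: upper_triangular_def)
  define ee where "ee = (\<lambda>m::nat. complex_of_real (inverse (real (Suc m))))"
  have ee0: "ee m \<noteq> 0" for m
  proof -
    have "inverse (real (Suc m)) \<noteq> 0" by simp
    thus ?thesis unfolding ee_def by (simp only: of_real_eq_0_iff not_False_eq_True)
  qed
  have eelim: "ee \<longlonglongrightarrow> 0"
    unfolding ee_def using tendsto_of_real[OF LIMSEQ_inverse_real_of_nat, where 'a=complex] by (simp only: of_real_0)
  define s where "s = (\<lambda>m. b1 (ee m) * G * b2 (ee m))"
  define z where "z = gperm n (w \<circ> \<tau>) (\<lambda>j. c0 * (if \<tau> j < j then -1 else 1))"
  have zc: "z \<in> carrier_mat n n" unfolding z_def by simp
  have sc: "s m \<in> carrier_mat n n" for m unfolding s_def using b1c b2c Gc by (metis mult_carrier_mat)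
  have sB: "s m \<in> bruhat_cell kk n w" for m
    unfolding bruhat_cell_def s_def G'[symmetric] using b1B b2B[OF ee0] c0 by blast
  have sE: "s m $$ (i,j) = c0 * (A i j + ee m * Bc i j)" if "i < n" "j < n" for m i j
    unfolding s_def using PE[OF that] PEq[OF that ee0] by simp
  have zE: "z $$ (i,j) = c0 * A i j" if "i < n" "j < n" for i j
    unfolding z_def A_def using that by auto
  have conv: "(\<lambda>m. s m $$ (i,j)) \<longlonglongrightarrow> z $$ (i,j)" if "i < n" "j < n" for i j
  proof -
    have "(\<lambda>m. c0 * (A i j + ee m * Bc i j)) \<longlonglongrightarrow> c0 * (A i j + 0 * Bc i j)"
      by (rule tendsto_mult_left, rule tendsto_add, rule tendsto_const, rule tendsto_mult_right, rule eelim)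
    thus ?thesis using sE[OF that] zE[OF that] by simp
  qed
  have detz: "det z = det G"
  proof -
    have "(\<lambda>m. det (s m)) \<longlonglongrightarrow> det z" by (rule det_tendsto[OF sc zc conv])
    moreover have "det (s m) = det G" for m
      unfolding s_def using det_mult[OF mult_carrier_mat[OF b1c Gc] b2c] det_mult[OF b1c Gc] detb1 detb2[OF ee0]
      by simp
    ultimately have "(\<lambda>m. det G) \<longlonglongrightarrow> det z" by simp
    thus ?thesis using LIMSEQ_const_iff by metis
  qed
  have zG: "z \<in> grp kk n" using c0 G' detz zc unfolding grp_def by (cases kk) auto
  have "z \<in> Z" unfolding closure_in_grp_def using zG sB conv
    by (intro CollectI conjI exI[of _ s]) auto
  thus ?thesis unfolding z_def .
qed

end



lemma det_perm_nz: assumes u: "u permutes {..<n}" shows "det (perm_mat n u) \<noteq> 0"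
proof -
  have P: "perm_mat n u = gperm n u (\<lambda>_. 1)" by (intro eq_matI) (auto simp: perm_mat_def)
  have "gperm n u (\<lambda>_. 1) * ginvp n u (\<lambda>_. 1) = 1\<^sub>m n" by (rule gperm_ginvp[OF u]) auto
  hence "det (gperm n u (\<lambda>_. 1)) * det (ginvp n u (\<lambda>_. 1)) = 1"
    using det_mult[of "gperm n u (\<lambda>_. 1)" n "ginvp n u (\<lambda>_. 1)"] by simp
  thus ?thesis unfolding P by auto
qed

lemma scal_exists: assumes u: "u permutes {..<n}" and n: "n > 0"
  shows "\<exists>c. c \<noteq> 0 \<and> c \<cdot>\<^sub>m perm_mat n u \<in> grp k n"
proof -
  obtain c where c: "c ^ n = 1 / det (perm_mat n u)" using root_exists[OF n] by blast
  have d: "det (perm_mat n u) \<noteq> 0" by (rule det_perm_nz[OF u])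
  have "det (c \<cdot>\<^sub>m perm_mat n u) = 1" using c d by (simp add: perm_mat_def)
  moreover have "c \<noteq> 0" using c d n by (auto simp: power_0_left)
  moreover have "c \<cdot>\<^sub>m perm_mat n u \<in> carrier_mat n n" by (simp add: perm_mat_def)
  ultimately show ?thesis unfolding grp_def by (cases k) auto
qed

context hyp begin

lemma conj_Z:
  assumes u: "u permutes {..<n}" and s: "\<And>j. j < n \<Longrightarrow> s j \<noteq> 0" and zZ: "gperm n u s \<in> Z"
  shows "ginvp n u s * x * gperm n u s \<in> H"
  by (rule incl[OF zZ ginvp_carrier gperm_ginvp[OF u s] ginvp_gperm[OF u s]])

lemma supp_Z:
  assumes u: "u permutes {..<n}" and s: "\<And>j. j < n \<Longrightarrow> s j \<noteq> 0" and zZ: "gperm n u s \<in> Z"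
    and a: "a < n" and b: "b < n" and ab: "a \<noteq> b" and nz: "x $$ (u a, u b) \<noteq> 0"
  shows "Em n a b \<in> H"
proof -
  have M: "ginvp n u s * x * gperm n u s \<in> H" by (rule conj_Z[OF u s zZ])
  have "(ginvp n u s * x * gperm n u s) $$ (a,b) = x $$ (u a, u b) * s b / s a"
    by (rule conj_entry[OF u xc a b])
  hence "(ginvp n u s * x * gperm n u s) $$ (a,b) \<noteq> 0" using nz s a b by simp
  thus ?thesis using support[OF M a b ab] by simp
qed

lemma diag_Z:
  assumes u: "u permutes {..<n}" and s: "\<And>j. j < n \<Longrightarrow> s j \<noteq> 0" and zZ: "gperm n u s \<in> Z"
  shows "dm n (\<lambda>i. x $$ (u i, u i)) \<in> H"
proof -
  have M: "ginvp n u s * x * gperm n u s \<in> H" by (rule conj_Z[OF u s zZ])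
  have "diagm (ginvp n u s * x * gperm n u s) = dm n (\<lambda>i. x $$ (u i, u i))"
  proof (rule eq_matI)
    fix i j assume "i < dim_row (dm n (\<lambda>i. x $$ (u i, u i)))" "j < dim_col (dm n (\<lambda>i. x $$ (u i, u i)))"
    hence i: "i < n" and j: "j < n" by auto
    show "diagm (ginvp n u s * x * gperm n u s) $$ (i,j) = dm n (\<lambda>i. x $$ (u i, u i)) $$ (i,j)"
      unfolding diagm_def using i j s[OF i] s[OF j] by (simp del: index_mult_mat(1) add: conj_entry[OF u xc])
  qed (auto simp: diagm_def)
  thus ?thesis using diag_H[OF M] by simp
qed

lemma supp_left:
  assumes u: "u permutes {..<n}" and s: "\<And>j. j < n \<Longrightarrow> s j \<noteq> 0" and zZ: "gperm n u s \<in> Z"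
    and bB: "b \<in> borel kk n" and bi: "bi \<in> carrier_mat n n" and bbi: "b * bi = 1\<^sub>m n" and bib: "bi * b = 1\<^sub>m n"
    and i: "i < n" and j: "j < n" and ij: "i \<noteq> j" and nz: "(bi * x * b) $$ (u i, u j) \<noteq> 0"
  shows "Em n i j \<in> H"
proof -
  have bc: "b \<in> carrier_mat n n" using borelD bB by auto
  have c1: "ginvp n u s * bi \<in> carrier_mat n n" "b * gperm n u s \<in> carrier_mat n n"
    "gperm n u s * ginvp n u s \<in> carrier_mat n n" "bi * b \<in> carrier_mat n n" using bc bi by auto
  have z'Z: "b * gperm n u s \<in> Z" by (rule left_mult_Z[OF bB zZ])
  have i1: "(b * gperm n u s) * (ginvp n u s * bi) = 1\<^sub>m n"
  proof -
    have "(b * gperm n u s) * (ginvp n u s * bi) = b * ((gperm n u s * ginvp n u s) * bi)"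
      using bc bi c1 by (simp add: as3)
    also have "\<dots> = 1\<^sub>m n" using gperm_ginvp[OF u s] bbi bi by simp
    finally show ?thesis .
  qed
  have i2: "(ginvp n u s * bi) * (b * gperm n u s) = 1\<^sub>m n"
  proof -
    have "(ginvp n u s * bi) * (b * gperm n u s) = ginvp n u s * ((bi * b) * gperm n u s)"
      using bc bi c1 by (simp add: as3)
    also have "\<dots> = 1\<^sub>m n" using ginvp_gperm[OF u s] bib by simp
    finally show ?thesis .
  qed
  have M: "(ginvp n u s * bi) * x * (b * gperm n u s) \<in> H"
    by (rule incl[OF z'Z c1(1) i1 i2])
  have eq: "(ginvp n u s * bi) * x * (b * gperm n u s) = ginvp n u s * (bi * x * b) * gperm n u s"
    using bc bi xc c1 by (simp add: as3)
  have yc: "bi * x * b \<in> carrier_mat n n" using bc bi xc by simp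
  have "(ginvp n u s * (bi * x * b) * gperm n u s) $$ (i,j) = (bi * x * b) $$ (u i, u j) * s j / s i"
    by (rule conj_entry[OF u yc i j])
  hence "(ginvp n u s * (bi * x * b) * gperm n u s) $$ (i,j) \<noteq> 0" using nz s i j by simp
  thus ?thesis using support[OF M[unfolded eq] i j ij] by simp
qed

definition Rm :: "nat \<Rightarrow> (nat \<Rightarrow> nat) \<Rightarrow> complex mat \<Rightarrow> complex mat" where
  "Rm m \<rho> g = mat m m (\<lambda>(a,j). g $$ (\<rho> a, j))"

lemma invariant:
  assumes mn: "m \<le> n" and \<rho>: "\<And>a. a < m \<Longrightarrow> \<rho> a < n"
    and comb: "\<And>\<pi>. \<pi> permutes {0..<m} \<Longrightarrow> \<exists>a<m. w (\<pi> a) < \<rho> a"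
    and zZ: "z \<in> Z"
  shows "det (Rm m \<rho> z) = 0"
proof -
  have bc0: "det (Rm m \<rho> g) = 0" if gB: "g \<in> bruhat_cell kk n w" for g
  proof -
    obtain b1 b2 c where b1: "b1 \<in> borel kk n" and b2: "b2 \<in> borel kk n"
      and e: "g = b1 * (c \<cdot>\<^sub>m perm_mat n w) * b2" using gB unfolding bruhat_cell_def by blast
    have b1c: "b1 \<in> carrier_mat n n" and b2c: "b2 \<in> carrier_mat n n" using borelD b1 b2 by auto
    have ub1: "upper_triangular b1" and ub2: "upper_triangular b2" using borelD b1 b2 by auto
    define G where "G = gperm n w (\<lambda>_. c)"
    have eG: "g = b1 * G * b2" unfolding e G_def smult_perm_mat ..
    have Gc: "G \<in> carrier_mat n n" unfolding G_def by simp
    define N where "N = mat m m (\<lambda>(a,t). c * b1 $$ (\<rho> a, w t))"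
    define T where "T = mat m m (\<lambda>(t,j). b2 $$ (t,j))"
    have BG: "(b1 * G) $$ (r,t) = c * b1 $$ (r, w t)" if r: "r < n" and t: "t < n" for r t
    proof -
      have "(b1 * G) $$ (r,t) = (\<Sum>q<n. b1 $$ (r,q) * G $$ (q,t))" by (rule mult_entry_n[OF b1c Gc r t])
      also have "\<dots> = (\<Sum>q<n. if q = w t then c * b1 $$ (r, w t) else 0)"
        using t unfolding G_def by (intro sum.cong refl) auto
      also have "\<dots> = c * b1 $$ (r, w t)" using perm_lt[OF wp t] by simp
      finally show ?thesis .
    qed
    have RNT: "Rm m \<rho> g = N * T"
    proof (rule eq_matI)
      fix a j assume "a < dim_row (N * T)" "j < dim_col (N * T)"
      hence a: "a < m" and j: "j < m" by (auto simp: N_def T_def)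
      have jn: "j < n" using j mn by auto
      have ra: "\<rho> a < n" using \<rho>[OF a] .
      have "Rm m \<rho> g $$ (a,j) = g $$ (\<rho> a, j)" unfolding Rm_def using a j by simp
      also have "\<dots> = (\<Sum>t<n. (b1 * G) $$ (\<rho> a, t) * b2 $$ (t,j))"
        unfolding eG by (rule mult_entry_n[OF mult_carrier_mat[OF b1c Gc] b2c ra jn])
      also have "\<dots> = (\<Sum>t<n. c * b1 $$ (\<rho> a, w t) * b2 $$ (t,j))"
        using BG ra by (intro sum.cong) auto
      also have "\<dots> = (\<Sum>t<m. c * b1 $$ (\<rho> a, w t) * b2 $$ (t,j))"
      proof (rule sum.mono_neutral_right)
        show "finite {..<n}" by simp
        show "{..<m} \<subseteq> {..<n}" using mn by auto
        show "\<forall>t\<in>{..<n} - {..<m}. c * b1 $$ (\<rho> a, w t) * b2 $$ (t,j) = 0"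
          using upper_zero[OF ub2 b2c] j by auto
      qed
      also have "\<dots> = (N * T) $$ (a,j)"
        using a j by (subst mult_entry[of N m m T m]) (auto simp: N_def T_def intro!: sum.cong)
      finally show "Rm m \<rho> g $$ (a,j) = (N * T) $$ (a,j)" .
    qed (auto simp: Rm_def N_def T_def)
    have Nc: "N \<in> carrier_mat m m" unfolding N_def by simp
    have Tc: "T \<in> carrier_mat m m" unfolding T_def by simp
    have "det N = 0"
    proof -
      have "det N = (\<Sum>p \<in> {p. p permutes {0..<m}}. signof p * (\<Prod>a = 0..<m. N $$ (a, p a)))"
        by (rule det_def'[OF Nc])
      also have "\<dots> = 0"
      proof (intro sum.neutral ballI)
        fix p assume p: "p \<in> {p. p permutes {0..<m}}"
        then obtain a where a: "a < m" and lt: "w (p a) < \<rho> a" using comb by blast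
        have pa: "p a < m" using permutes_in_image[of p "{0..<m}" a] p a by auto
        have "N $$ (a, p a) = 0" unfolding N_def using a pa upper_zero[OF ub1 b1c \<rho>[OF a] lt] by simp
        hence "(\<Prod>a = 0..<m. N $$ (a, p a)) = 0" using a by (intro prod_zero) auto
        thus "signof p * (\<Prod>a = 0..<m. N $$ (a, p a)) = 0" by simp
      qed
      finally show ?thesis .
    qed
    thus ?thesis unfolding RNT using det_mult[OF Nc Tc] by simp
  qed
  obtain s where sS: "\<And>k. s k \<in> bruhat_cell kk n w" and conv: "\<And>i j. i < n \<Longrightarrow> j < n \<Longrightarrow> (\<lambda>k. s k $$ (i,j)) \<longlonglongrightarrow> z $$ (i,j)"
    using zZ unfolding closure_in_grp_def by blast
  have "(\<lambda>k. det (Rm m \<rho> (s k))) \<longlonglongrightarrow> det (Rm m \<rho> z)"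
  proof (rule det_tendsto)
    show "Rm m \<rho> (s k) \<in> carrier_mat m m" for k unfolding Rm_def by simp
    show "Rm m \<rho> z \<in> carrier_mat m m" unfolding Rm_def by simp
    fix a j assume a: "a < m" and j: "j < m"
    show "(\<lambda>k. Rm m \<rho> (s k) $$ (a,j)) \<longlonglongrightarrow> Rm m \<rho> z $$ (a,j)"
      unfolding Rm_def using a j conv[OF \<rho>[OF a]] mn by simp
  qed
  moreover have "det (Rm m \<rho> (s k)) = 0" for k using bc0[OF sS] .
  ultimately have "(\<lambda>k. 0) \<longlonglongrightarrow> det (Rm m \<rho> z)" by simp
  thus ?thesis using LIMSEQ_const_iff by metis
qed

end



definition unip :: "nat \<Rightarrow> nat \<Rightarrow> nat \<Rightarrow> complex \<Rightarrow> complex mat" where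
  "unip n B C t = mat n n (\<lambda>(i,j). if i = j then 1 else if i = B \<and> j = C then t else 0)"

lemma unip_carrier[simp]: "unip n B C t \<in> carrier_mat n n" by (simp add: unip_def)
lemma unip_index: "i < n \<Longrightarrow> j < n \<Longrightarrow> unip n B C t $$ (i,j) = (if i = j then 1 else if i = B \<and> j = C then t else 0)"
  by (simp add: unip_def)

lemma unip_mult: assumes BC: "B \<noteq> C" and B: "B < n" and C: "C < n"
  shows "unip n B C t * unip n B C u = unip n B C (t + u)"
proof (rule eq_matI)
  fix i j assume "i < dim_row (unip n B C (t + u))" "j < dim_col (unip n B C (t + u))"
  hence i: "i < n" and j: "j < n" by (auto simp: unip_def)
  have "(unip n B C t * unip n B C u) $$ (i,j) = (\<Sum>k<n. unip n B C t $$ (i,k) * unip n B C u $$ (k,j))"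
    by (rule mult_entry_n[OF unip_carrier unip_carrier i j])
  also have "\<dots> = (\<Sum>k<n. (if k = i then unip n B C u $$ (i,j) else 0) + (if k = C then (if i = B then t * unip n B C u $$ (C,j) else 0) else 0))"
    using i j BC by (intro sum.cong refl) (auto simp: unip_index)
  also have "\<dots> = unip n B C u $$ (i,j) + (if i = B then t * unip n B C u $$ (C,j) else 0)"
    using i C by (simp add: sum.distrib)
  also have "\<dots> = unip n B C (t + u) $$ (i,j)" using i j BC C by (auto simp: unip_index)
  finally show "(unip n B C t * unip n B C u) $$ (i,j) = unip n B C (t + u) $$ (i,j)" .
qed (auto simp: unip_def)

lemma unip_zero: "unip n B C 0 = 1\<^sub>m n" by (intro eq_matI) (auto simp: unip_def)

lemma unip_borel: assumes "B < C" "C < n" shows "unip n B C t \<in> borel k n"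
proof -
  have ut: "upper_triangular (unip n B C t)" unfolding upper_triangular_def using assms by (auto simp: unip_def)
  have "det (unip n B C t) = (\<Prod>i = 0..<n. unip n B C t $$ (i,i))"
    using det_upper_triangular[OF ut unip_carrier] by (simp add: prod_list_diag_prod unip_def)
  also have "\<dots> = 1" by (intro prod.neutral) (auto simp: unip_def)
  finally have "det (unip n B C t) = 1" .
  thus ?thesis unfolding borel_def grp_def using ut by (cases k) auto
qed

lemma unip_conj_entry: assumes BC: "B < C" and C: "C < n" and x: "x \<in> carrier_mat n n"
  shows "(unip n B C (-1) * x * unip n B C 1) $$ (B,C) = x $$ (B,C) + x $$ (B,B) - x $$ (C,C) - x $$ (C,B)"
proof -
  have B: "B < n" using BC C by auto
  have "(unip n B C (-1) * x * unip n B C 1) $$ (B,C) = (\<Sum>a<n. \<Sum>b<n. unip n B C (-1) $$ (B,a) * x $$ (a,b) * unip n B C 1 $$ (b,C))"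
    by (rule triple_entry[OF unip_carrier x unip_carrier B C])
  also have "\<dots> = (\<Sum>a<n. unip n B C (-1) $$ (B,a) * (x $$ (a,C) + x $$ (a,B)))"
  proof (intro sum.cong refl)
    fix a assume a: "a \<in> {..<n}"
    have "(\<Sum>b<n. unip n B C (-1) $$ (B,a) * x $$ (a,b) * unip n B C 1 $$ (b,C)) =
          (\<Sum>b<n. (if b = C then unip n B C (-1) $$ (B,a) * x $$ (a,C) else 0) + (if b = B then unip n B C (-1) $$ (B,a) * x $$ (a,B) else 0))"
      using a BC C by (intro sum.cong refl) (auto simp: unip_index)
    also have "\<dots> = unip n B C (-1) $$ (B,a) * (x $$ (a,C) + x $$ (a,B))"
      using B C by (simp add: sum.distrib algebra_simps)
    finally show "(\<Sum>b<n. unip n B C (-1) $$ (B,a) * x $$ (a,b) * unip n B C 1 $$ (b,C)) = unip n B C (-1) $$ (B,a) * (x $$ (a,C) + x $$ (a,B))" .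
  qed
  also have "\<dots> = (\<Sum>a<n. (if a = B then x $$ (B,C) + x $$ (B,B) else 0) + (if a = C then - (x $$ (C,C) + x $$ (C,B)) else 0))"
    using BC C by (intro sum.cong refl) (auto simp: unip_index)
  also have "\<dots> = x $$ (B,C) + x $$ (B,B) - x $$ (C,C) - x $$ (C,B)"
    using B C by (simp add: sum.distrib)
  finally show ?thesis .
qed

context hyp begin

lemma tau_Z:
  assumes tp: "\<sigma> permutes {..<n}" and ti: "\<And>j. \<sigma> (\<sigma> j) = j"
    and tor: "\<And>p. p < n \<Longrightarrow> p < \<sigma> p \<Longrightarrow> w (\<sigma> p) < w p"
    and c0: "c0 \<cdot>\<^sub>m perm_mat n w \<in> grp kk n" and c0nz: "c0 \<noteq> 0"
  shows "\<And>a b. a < n \<Longrightarrow> b < n \<Longrightarrow> a \<noteq> b \<Longrightarrow> x $$ (w (\<sigma> a), w (\<sigma> b)) \<noteq> 0 \<Longrightarrow> Em n a b \<in> H"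
    and "gperm n (w \<circ> \<sigma>) (\<lambda>j. c0 * (if \<sigma> j < j then -1 else 1)) \<in> Z"
    and "dm n (\<lambda>i. x $$ (w (\<sigma> i), w (\<sigma> i))) \<in> H"
proof -
  have zZ: "gperm n (w \<circ> \<sigma>) (\<lambda>j. c0 * (if \<sigma> j < j then -1 else 1)) \<in> Z"
    by (rule closure_tau[OF tp ti tor c0])
  have up: "(w \<circ> \<sigma>) permutes {..<n}" by (rule permutes_compose[OF tp wp])
  have snz: "\<And>j. j < n \<Longrightarrow> c0 * (if \<sigma> j < j then -1 else 1) \<noteq> 0" using c0nz by auto
  show "\<And>a b. a < n \<Longrightarrow> b < n \<Longrightarrow> a \<noteq> b \<Longrightarrow> x $$ (w (\<sigma> a), w (\<sigma> b)) \<noteq> 0 \<Longrightarrow> Em n a b \<in> H"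
    using supp_Z[OF up snz zZ] by simp
  show "gperm n (w \<circ> \<sigma>) (\<lambda>j. c0 * (if \<sigma> j < j then -1 else 1)) \<in> Z" by (rule zZ)
  show "dm n (\<lambda>i. x $$ (w (\<sigma> i), w (\<sigma> i))) \<in> H" using diag_Z[OF up snz zZ] by simp
qed

lemma main_contra:
  assumes p12: "p1 < p2" and p23: "p2 < p3" and p34: "p3 < p4" and p4n: "p4 < n"
    and o42: "w p4 < w p2" and o23: "w p2 < w p3" and o31: "w p3 < w p1"
  shows False
proof -
  have n0: "n > 0" using p4n by auto
  have pn: "p1 < n" "p2 < n" "p3 < n" "p4 < n" using assms by auto
  obtain c0 where c0nz: "c0 \<noteq> 0" and c0: "c0 \<cdot>\<^sub>m perm_mat n w \<in> grp kk n"
    using scal_exists[OF wp n0] by blast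
  define t13 where "t13 = Transposition.transpose p1 p3"
  define t24 where "t24 = Transposition.transpose p2 p4"
  define t23 where "t23 = Transposition.transpose p2 p3"
  define tt where "tt = (\<lambda>y. t13 (t24 y))"
  have t13p: "t13 permutes {..<n}" unfolding t13_def using pn by (intro permutes_swap_id) auto
  have t24p: "t24 permutes {..<n}" unfolding t24_def using pn by (intro permutes_swap_id) auto
  have t23p: "t23 permutes {..<n}" unfolding t23_def using pn by (intro permutes_swap_id) auto
  have ttp: "tt permutes {..<n}"
  proof -
    have "t13 \<circ> t24 permutes {..<n}" by (rule permutes_compose[OF t24p t13p])
    thus ?thesis unfolding tt_def comp_def .
  qed
  have idp: "id permutes {..<n}" by simp
  have t13i: "t13 (t13 j) = j" for j unfolding t13_def by simp
  have t24i: "t24 (t24 j) = j" for j unfolding t24_def by simp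
  have t23i: "t23 (t23 j) = j" for j unfolding t23_def by simp
  have tti: "tt (tt j) = j" for j unfolding tt_def t13_def t24_def transpose_def using assms by auto
  have idi: "id (id j) = j" for j by simp
  have o13: "w (t13 p) < w p" if "p < n" "p < t13 p" for p
    using that assms unfolding t13_def transpose_def by (auto split: if_splits)
  have o24: "w (t24 p) < w p" if "p < n" "p < t24 p" for p
    using that assms unfolding t24_def transpose_def by (auto split: if_splits)
  have ott: "w (tt p) < w p" if "p < n" "p < tt p" for p
    using that assms unfolding tt_def t13_def t24_def transpose_def by (auto split: if_splits)
  have oid: "w (id p) < w p" if "p < n" "p < id p" for p using that by simp
  note Sid = tau_Z[OF idp idi oid c0 c0nz]
  note S13 = tau_Z[OF t13p t13i o13 c0 c0nz]
  note S24 = tau_Z[OF t24p t24i o24 c0 c0nz]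
  note Stt = tau_Z[OF ttp tti ott c0 c0nz]
  define v0 where "v0 = w \<circ> t23"
  have v0p: "v0 permutes {..<n}" unfolding v0_def by (rule permutes_compose[OF t23p wp])
  obtain c1 where c1nz: "c1 \<noteq> 0" and c1: "c1 \<cdot>\<^sub>m perm_mat n v0 \<in> grp kk n"
    using scal_exists[OF v0p n0] by blast
  define V where "V = gperm n v0 (\<lambda>_. c1)"
  define Vi where "Vi = ginvp n v0 (\<lambda>_. c1)"
  have VG: "V \<in> grp kk n" using c1 unfolding V_def smult_perm_mat .
  have VVi: "V * Vi = 1\<^sub>m n" unfolding V_def Vi_def by (rule gperm_ginvp[OF v0p]) (use c1nz in auto)
  have ViV: "Vi * V = 1\<^sub>m n" unfolding V_def Vi_def by (rule ginvp_gperm[OF v0p]) (use c1nz in auto)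
  define M where "M = Vi * x * V"
  have Mc: "M \<in> carrier_mat n n" unfolding M_def V_def Vi_def
    using mult_carrier_mat[OF mult_carrier_mat[OF ginvp_carrier xc] gperm_carrier] .
  have ME: "M $$ (a,b) = x $$ (v0 a, v0 b)" if "a < n" "b < n" for a b
    unfolding M_def V_def Vi_def using conj_entry[OF v0p xc that, of "\<lambda>_. c1"] c1nz by simp
  have via: "Em n a b \<in> H"
    if sup: "\<And>a b. a < n \<Longrightarrow> b < n \<Longrightarrow> a \<noteq> b \<Longrightarrow> x $$ (w (\<sigma> a), w (\<sigma> b)) \<noteq> 0 \<Longrightarrow> Em n a b \<in> H"
      and sp: "\<sigma> permutes {..<n}" and si: "\<And>j. \<sigma> (\<sigma> j) = j"
      and a: "a < n" and b: "b < n" and ab: "a \<noteq> b" and nz: "x $$ (v0 a, v0 b) \<noteq> 0"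
      and le1: "a \<le> \<sigma> (t23 a)" and le2: "\<sigma> (t23 b) \<le> b"
    for \<sigma> a b
  proof -
    define a' where "a' = \<sigma> (t23 a)"
    define b' where "b' = \<sigma> (t23 b)"
    have a': "a' < n" unfolding a'_def using perm_lt[OF sp] perm_lt[OF t23p] a by auto
    have b': "b' < n" unfolding b'_def using perm_lt[OF sp] perm_lt[OF t23p] b by auto
    have ab': "a' \<noteq> b'" unfolding a'_def b'_def using ab si t23i by metis
    have "x $$ (w (\<sigma> a'), w (\<sigma> b')) = x $$ (v0 a, v0 b)" unfolding a'_def b'_def v0_def using si by simp
    hence "Em n a' b' \<in> H" using sup[OF a' b' ab'] nz by simp
    thus ?thesis using uright[of a' b' a b] a' b' ab' le1 le2 b ab unfolding a'_def b'_def by auto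
  qed
  have supM: "Em n a b \<in> H" if a: "a < n" and b: "b < n" and ab: "a \<noteq> b" and nzM: "M $$ (a,b) \<noteq> 0" for a b
  proof -
    have nz: "x $$ (v0 a, v0 b) \<noteq> 0" using nzM ME[OF a b] by simp
    consider (c1) "a = p3 \<and> b = p2" | (c2) "a = p3 \<and> b \<noteq> p2" | (c3) "a = p2" | (c4) "a \<noteq> p2 \<and> a \<noteq> p3 \<and> b = p2"
      | (c5) "a \<noteq> p2 \<and> a \<noteq> p3 \<and> b \<noteq> p2" by blast
    then show ?thesis
    proof cases
      case c1
      show ?thesis by (rule via[OF Stt(1) ttp tti a b ab nz]) (use c1 assms in \<open>auto simp: tt_def t13_def t24_def t23_def transpose_def\<close>)
    next
      case c2
      show ?thesis by (rule via[OF S24(1) t24p t24i a b ab nz]) (use c2 ab assms in \<open>auto simp: t24_def t23_def transpose_def\<close>)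
    next
      case c3
      show ?thesis by (rule via[OF Sid(1) idp idi a b ab nz]) (use c3 ab assms in \<open>auto simp: t23_def transpose_def\<close>)
    next
      case c4
      show ?thesis by (rule via[OF S13(1) t13p t13i a b ab nz]) (use c4 ab assms in \<open>auto simp: t13_def t23_def transpose_def\<close>)
    next
      case c5
      show ?thesis by (rule via[OF Sid(1) idp idi a b ab nz]) (use c5 ab assms in \<open>auto simp: t23_def transpose_def\<close>)
    qed
  qed

  define B where "B = w p2"
  define C where "C = w p3"
  have BC: "B < C" unfolding B_def C_def using o23 .
  have Cn: "C < n" unfolding C_def using perm_lt[OF wp pn(3)] .
  have ttp4: "w (tt p4) = B" unfolding B_def tt_def t13_def t24_def transpose_def using assms by auto
  have ttp1: "w (tt p1) = C" unfolding C_def tt_def t13_def t24_def transpose_def using assms by auto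
  have E41: "Em n p4 p1 \<in> H" if ne: "x $$ (B,B) \<noteq> x $$ (C,C)" and cb: "x $$ (C,B) = 0"
  proof -
    define y where "y = unip n B C (-1) * x * unip n B C 1"
    have yE: "y $$ (B,C) = x $$ (B,C) + x $$ (B,B) - x $$ (C,C) - x $$ (C,B)"
      unfolding y_def by (rule unip_conj_entry[OF BC Cn xc])
    show ?thesis
    proof (cases "y $$ (B,C) = 0")
      case False
      have bB: "unip n B C 1 \<in> borel kk n" by (rule unip_borel[OF BC Cn])
      have m1: "unip n B C 1 * unip n B C (-1) = 1\<^sub>m n" using unip_mult[of B C n 1 "-1"] BC Cn unip_zero by simp
      have m2: "unip n B C (-1) * unip n B C 1 = 1\<^sub>m n" using unip_mult[of B C n "-1" 1] BC Cn unip_zero by simp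
      have up: "(w \<circ> tt) permutes {..<n}" by (rule permutes_compose[OF ttp wp])
      show ?thesis
        by (rule supp_left[OF up _ Stt(2) bB unip_carrier m1 m2 pn(4) pn(1)])
           (use c0nz False ttp4 ttp1 assms in \<open>auto simp: y_def\<close>)
    next
      case True
      hence bc: "x $$ (B,C) \<noteq> 0" using yE ne cb by auto
      show ?thesis by (rule Stt(1)) (use bc ttp4 ttp1 assms in auto)
    qed
  qed
  have E32: "Em n p3 p2 \<in> H" if ne: "x $$ (B,B) \<noteq> x $$ (C,C)"
  proof (cases "x $$ (C,B) = 0")
    case True
    have "Em n p4 p1 \<in> H" by (rule E41[OF ne True])
    thus ?thesis using uright[of p4 p1 p3 p2] assms by auto
  next
    case False
    show ?thesis by (rule Sid(1)) (use False assms in \<open>auto simp: B_def C_def\<close>)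
  qed
  have Dv: "dm n (\<lambda>i. x $$ (v0 i, v0 i)) \<in> H"
  proof (cases "x $$ (B,B) = x $$ (C,C)")
    case True
    have "dm n (\<lambda>i. x $$ (v0 i, v0 i)) = dm n (\<lambda>i. x $$ (w (id i), w (id i)))"
      using True unfolding v0_def t23_def B_def C_def transpose_def by (intro eq_matI) auto
    thus ?thesis using Sid(3) by simp
  next
    case False
    have D: "Em n p2 p2 - Em n p3 p3 \<in> H" using Ediff[OF E32[OF False] pn(3) p23] .
    have "dm n (\<lambda>i. x $$ (w (id i), w (id i))) + (x $$ (C,C) - x $$ (B,B)) \<cdot>\<^sub>m (Em n p2 p2 - Em n p3 p3) \<in> H"
      using Sid(3) D by (intro add smult)
    moreover have "dm n (\<lambda>i. x $$ (w (id i), w (id i))) + (x $$ (C,C) - x $$ (B,B)) \<cdot>\<^sub>m (Em n p2 p2 - Em n p3 p3) = dm n (\<lambda>i. x $$ (v0 i, v0 i))"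
      unfolding v0_def t23_def B_def C_def transpose_def using p23 by (intro eq_matI) auto
    ultimately show ?thesis by simp
  qed
  have "diagm M = dm n (\<lambda>i. x $$ (v0 i, v0 i))"
    unfolding diagm_def using ME by (intro eq_matI) auto
  hence "diagm M \<in> H" using Dv by simp
  hence "M \<in> H" using char[OF Mc supM] by blast
  hence "\<exists>z \<in> Z. \<exists>b \<in> borel kk n. z = V * b"
    using excl[OF VG _ VVi ViV] unfolding M_def Vi_def by simp
  then obtain z b where zZ: "z \<in> Z" and bB: "b \<in> borel kk n" and zVb: "z = V * b" by blast
  have bc: "b \<in> carrier_mat n n" and ub: "upper_triangular b" and db: "det b \<noteq> 0" using borelD bB by auto
  have bd: "b $$ (a,a) \<noteq> 0" if "a < n" for a
  proof -
    have "det b = (\<Prod>i = 0..<n. b $$ (i,i))"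
      using det_upper_triangular[OF ub bc] bc by (simp add: prod_list_diag_prod)
    thus ?thesis using db that by auto
  qed
  define m where "m = Suc p2"
  have mn: "m \<le> n" unfolding m_def using pn by auto
  have comb: "\<exists>a<m. w (\<pi> a) < v0 a" if \<pi>: "\<pi> permutes {0..<m}" for \<pi>
  proof (rule ccontr)
    assume "\<not> ?thesis"
    hence le: "\<And>a. a < m \<Longrightarrow> v0 a \<le> w (\<pi> a)" by (metis not_less)
    define S2 where "S2 = {t \<in> {0..<m}. C \<le> w t}"
    define S1 where "S1 = insert p2 S2"
    have p2S2: "p2 \<notin> S2" unfolding S2_def C_def using o23 by auto
    have fin: "finite S2" unfolding S2_def by auto
    have cS1: "card S1 = Suc (card S2)" unfolding S1_def using fin p2S2 by simp
    have sub: "\<pi> ` S1 \<subseteq> S2"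
    proof
      fix y assume "y \<in> \<pi> ` S1"
      then obtain a where aS: "a \<in> S1" and y: "y = \<pi> a" by blast
      have am: "a < m" using aS unfolding S1_def S2_def m_def by auto
      have "C \<le> v0 a"
      proof (cases "a = p2")
        case True then show ?thesis unfolding v0_def t23_def C_def by simp
      next
        case False
        hence "a \<in> S2" using aS unfolding S1_def by auto
        moreover have "v0 a = w a" unfolding v0_def t23_def using False am p23 unfolding m_def by auto
        ultimately show ?thesis unfolding S2_def by auto
      qed
      hence "C \<le> w (\<pi> a)" using le[OF am] by simp
      moreover have "\<pi> a < m" using permutes_in_image[OF \<pi>, of a] am by auto
      ultimately show "y \<in> S2" unfolding S2_def y by auto
    qed
    have "inj_on \<pi> S1" using permutes_inj[OF \<pi>] by (auto intro: inj_on_subset)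
    hence "card (\<pi> ` S1) = card S1" by (rule card_image)
    moreover have "card (\<pi> ` S1) \<le> card S2" using card_mono[OF fin sub] .
    ultimately show False using cS1 by simp
  qed
  have d0: "det (Rm m v0 z) = 0"
    by (rule invariant[OF mn _ comb zZ]) (use perm_lt[OF v0p] mn in auto)
  have RE: "Rm m v0 (V * b) = c1 \<cdot>\<^sub>m mat m m (\<lambda>(a,j). b $$ (a,j))"
  proof (rule eq_matI)
    fix a j assume "a < dim_row (c1 \<cdot>\<^sub>m mat m m (\<lambda>(a,j). b $$ (a,j)))" "j < dim_col (c1 \<cdot>\<^sub>m mat m m (\<lambda>(a,j). b $$ (a,j)))"
    hence a: "a < m" and j: "j < m" by auto
    have an: "a < n" and jn: "j < n" using a j mn by auto
    have va: "v0 a < n" using perm_lt[OF v0p an] .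
    have "Rm m v0 (V * b) $$ (a,j) = (V * b) $$ (v0 a, j)" unfolding Rm_def using a j by simp
    also have "\<dots> = (\<Sum>t<n. V $$ (v0 a, t) * b $$ (t,j))"
      by (rule mult_entry_n) (use bc va jn in \<open>auto simp: V_def\<close>)
    also have "\<dots> = (\<Sum>t<n. if t = a then c1 * b $$ (a,j) else 0)"
    proof (intro sum.cong refl)
      fix t assume t: "t \<in> {..<n}"
      have "v0 a = v0 t \<longleftrightarrow> a = t" using permutes_inj[OF v0p] by (auto dest: injD)
      thus "V $$ (v0 a, t) * b $$ (t,j) = (if t = a then c1 * b $$ (a,j) else 0)"
        unfolding V_def using t va by auto
    qed
    also have "\<dots> = c1 * b $$ (a,j)" using an by simp
    finally show "Rm m v0 (V * b) $$ (a,j) = (c1 \<cdot>\<^sub>m mat m m (\<lambda>(a,j). b $$ (a,j))) $$ (a,j)" using a j by simp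
  qed (auto simp: Rm_def)
  have "det (mat m m (\<lambda>(a,j). b $$ (a,j))) = (\<Prod>a = 0..<m. b $$ (a,a))"
  proof -
    have ut: "upper_triangular (mat m m (\<lambda>(a,j). b $$ (a,j)))"
      unfolding upper_triangular_def using upper_zero[OF ub bc] mn by auto
    show ?thesis using det_upper_triangular[OF ut, of m] by (simp add: prod_list_diag_prod)
  qed
  moreover have "(\<Prod>a = 0..<m. b $$ (a,a)) \<noteq> 0" using bd mn by auto
  ultimately have "det (Rm m v0 (V * b)) \<noteq> 0" unfolding RE using c1nz by simp
  thus False using d0 zVb by simp
qed

end

theorem theorem1p8:
  fixes k :: group_kind and n :: nat and w :: "nat \<Rightarrow> nat"
  assumes "w permutes {..<n}"
    and "\<exists>x \<in> lie k n. \<exists>H. hessenberg_space k n H \<and>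
           hessenberg_variety k n x H = schubert k n w"
  shows "avoids_pattern [4,2,3,1] n w"
proof -
  obtain x H where xl: "x \<in> lie k n" and hs: "hessenberg_space k n H"
    and HV: "hessenberg_variety k n x H = schubert k n w" using assms(2) by blast
  interpret hyp k n H x w
    by (unfold_locales) (use hs xl assms(1) HV in auto)
  show ?thesis unfolding avoids_pattern_def contains_pattern_def
  proof
    assume "\<exists>idx :: nat \<Rightarrow> nat. (\<forall>a b. a < b \<and> b < length [4::nat,2,3,1] \<longrightarrow> idx a < idx b)
      \<and> (\<forall>a < length [4::nat,2,3,1]. idx a < n)
      \<and> (\<forall>a < length [4::nat,2,3,1]. \<forall>b < length [4::nat,2,3,1]. (w (idx a) < w (idx b) \<longleftrightarrow> [4::nat,2,3,1] ! a < [4::nat,2,3,1] ! b))"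
    then obtain idx :: "nat \<Rightarrow> nat" where inc: "\<forall>a b. a < b \<and> b < length [4::nat,2,3,1] \<longrightarrow> idx a < idx b"
      and lt: "\<forall>a < length [4::nat,2,3,1]. idx a < n"
      and ord: "\<forall>a < length [4::nat,2,3,1]. \<forall>b < length [4::nat,2,3,1]. (w (idx a) < w (idx b) \<longleftrightarrow> [4::nat,2,3,1] ! a < [4::nat,2,3,1] ! b)"
      by blast
    have "idx 0 < idx 1" using inc[rule_format, of 0 1] by simp
    moreover have "idx 1 < idx 2" using inc[rule_format, of 1 2] by simp
    moreover have "idx 2 < idx 3" using inc[rule_format, of 2 3] by simp
    moreover have "idx 3 < n" using lt[rule_format, of 3] by simp
    moreover have "w (idx 3) < w (idx 1)" using ord[rule_format, of 3 1] by simp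
    moreover have "w (idx 1) < w (idx 2)" using ord[rule_format, of 1 2] by simp
    moreover have "w (idx 2) < w (idx 0)" using ord[rule_format, of 2 0] by simp
    ultimately show False by (rule main_contra)
  qed
qed


end
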